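(* Let $b\ge2$ be an integer, $\gamma\in(0,1)$, and let $\phi$ be a real analytic $\mathbb{Z}$-periodic function satisfying condition (H) (for all $\mathbf{i}\neq\mathbf{j}\in\Sigma$, $x\mapsto S(x,\mathbf{j})-S(x,\mathbf{i})$ is not identically zero on $[0,1]$). Then there exist $\ell_0\in\mathbb{N}$ and $\varepsilon_0>0$ such that for Lebesgue-a.e. $x\in[0,1]$ the following holds: for every integer $\ell\ge\ell_0$ there exists a set $Q_{x,\ell}\subset\mathbb{Z}_+$ such that (i) $Q_{x,\ell}$ is infinite; (ii) for every $\mathbf{w}\in\Lambda^{\ell}$ and every $n\in Q_{x,\ell}$, any two distinct points $p\neq q$ of $X^{\mathbf{w},x}_{\hat n}$ satisfy $|p-q|>\varepsilon_0^{\hat n}$, where $X^{\mathbf{w},x}_{N}=\{S(x,\mathbf{j}\mathbf{w}):\mathbf{j}\in\Lambda^{N-\ell}\}$ for $N>\ell$ and $X^{\mathbf{w},x}_N=\{0\}$ for $N\le\ell$.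
   Context: $\Lambda=\{0,\dots,b-1\}$, $\Sigma=\Lambda^{\mathbb{Z}_+}$. For a word $\mathbf{j}=j_1\cdots j_p$ of length $1\le p\le\infty$ and $x\in[0,1]$, $S(x,\mathbf{j})=\sum_{n=1}^{p}\gamma^{n-1}\phi\big(\frac{x+j_1+j_2b+\cdots+j_nb^{n-1}}{b^n}\big)$; $\mathbf{j}\mathbf{w}$ denotes concatenation of words. For $n\in\mathbb{N}$, $\hat n$ is the unique integer with $\gamma^{\hat n}\le b^{-n}<\gamma^{\hat n-1}$. *)

theory Defs
  imports "HOL-Analysis.Analysis"
begin

definition real_analytic :: "(real \<Rightarrow> real) \<Rightarrow> bool" where
  "real_analytic f \<longleftrightarrow> (\<forall>x0. \<exists>r>0. \<exists>a::nat \<Rightarrow> real.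
      \<forall>y. \<bar>y - x0\<bar> < r \<longrightarrow> (\<lambda>n. a n * (y - x0) ^ n) sums f y)"

text \<open>Finite words over Lambda = {0..b-1} are lists; the letter j_k is js ! (k-1).
  S(x, j) for a finite word j = j_1 ... j_p.\<close>
definition S_fin :: "nat \<Rightarrow> real \<Rightarrow> (real \<Rightarrow> real) \<Rightarrow> real \<Rightarrow> nat list \<Rightarrow> real" where
  "S_fin b \<gamma> \<phi> x js = (\<Sum>n=1..length js. \<gamma> ^ (n - 1) *
      \<phi> ((x + (\<Sum>k=1..n. real (js ! (k - 1)) * real b ^ (k - 1))) / real b ^ n))"

text \<open>Infinite words in Sigma: sequences s with j_k = s (k-1).\<close>
definition S_inf :: "nat \<Rightarrow> real \<Rightarrow> (real \<Rightarrow> real) \<Rightarrow> real \<Rightarrow> (nat \<Rightarrow> nat) \<Rightarrow> real" where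
  "S_inf b \<gamma> \<phi> x s = (\<Sum>n. \<gamma> ^ n *
      \<phi> ((x + (\<Sum>k=1..Suc n. real (s (k - 1)) * real b ^ (k - 1))) / real b ^ Suc n))"

definition Sigma_b :: "nat \<Rightarrow> (nat \<Rightarrow> nat) set" where
  "Sigma_b b = {s. \<forall>k. s k < b}"

definition words :: "nat \<Rightarrow> nat \<Rightarrow> nat list set" where
  "words b m = {js. length js = m \<and> (\<forall>j\<in>set js. j < b)}"

definition cond_H :: "nat \<Rightarrow> real \<Rightarrow> (real \<Rightarrow> real) \<Rightarrow> bool" where
  "cond_H b \<gamma> \<phi> \<longleftrightarrow> (\<forall>i\<in>Sigma_b b. \<forall>j\<in>Sigma_b b. i \<noteq> j \<longrightarrow>
      (\<exists>x\<in>{0..1}. S_inf b \<gamma> \<phi> x j - S_inf b \<gamma> \<phi> x i \<noteq> 0))"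

definition hat :: "nat \<Rightarrow> real \<Rightarrow> nat \<Rightarrow> int" where
  "hat b \<gamma> n = (THE k::int. \<gamma> powi k \<le> 1 / real b ^ n \<and> 1 / real b ^ n < \<gamma> powi (k - 1))"

definition Xset :: "nat \<Rightarrow> real \<Rightarrow> (real \<Rightarrow> real) \<Rightarrow> nat list \<Rightarrow> real \<Rightarrow> int \<Rightarrow> real set" where
  "Xset b \<gamma> \<phi> w x N = (if N > int (length w)
      then {S_fin b \<gamma> \<phi> x (js @ w) | js. js \<in> words b (nat (N - int (length w)))}
      else {0})"

end

theory Submission
  imports Defs
begin


locale wf =
  fixes b :: nat and \<gamma> :: real and \<phi> :: "real \<Rightarrow> real"
  assumes b2: "b \<ge> 2" and g0: "0 < \<gamma>" and g1: "\<gamma> < 1"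
    and an: "real_analytic \<phi>" and per: "\<forall>x. \<phi> (x + 1) = \<phi> x"
begin

definition D :: "nat \<Rightarrow> real \<Rightarrow> real" where "D k = (deriv ^^ k) \<phi>"

lemma D0: "D 0 = \<phi>" by (simp add: D_def)
lemma DSuc: "D (Suc k) = deriv (D k)" by (simp add: D_def)

lemma diffs_iter: "(diffs ^^ k) (a::nat\<Rightarrow>real) n = fact (n + k) / fact n * a (n + k)"
proof (induction k arbitrary: n)
  case 0 then show ?case by simp
next
  case (Suc k)
  have "(diffs ^^ Suc k) a n = diffs ((diffs ^^ k) a) n" by simp
  also have "\<dots> = of_nat (Suc n) * ((diffs ^^ k) a (Suc n))" by (simp add: diffs_def)
  also have "\<dots> = of_nat (Suc n) * (fact (Suc n + k) / fact (Suc n) * a (Suc n + k))"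
    using Suc by simp
  also have "\<dots> = (of_nat (Suc n) / fact (Suc n)) * fact (n + Suc k) * a (n + Suc k)"
    by simp
  also have "of_nat (Suc n) / fact (Suc n) = (1::real) / fact n"
    by (simp add: fact_Suc field_simps del: of_nat_Suc)
  finally show ?case by simp
qed
lemma dummy: True
  by simp

lemma local_ps:
  fixes x0 :: real
  obtains r a where "r > 0"
    "\<And>k z. \<bar>z\<bar> < r \<Longrightarrow> summable (\<lambda>n. (diffs ^^ k) a n * z ^ n)"
    "\<And>k z. \<bar>z\<bar> < r \<Longrightarrow> D k (x0 + z) = (\<Sum>n. (diffs ^^ k) a n * z ^ n)"
proof -
  obtain r a where r: "r > 0" and sa: "\<And>y. \<bar>y - x0\<bar> < r \<Longrightarrow> (\<lambda>n. a n * (y - x0) ^ n) sums \<phi> y"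
    using an unfolding real_analytic_def by blast
  have sm: "summable (\<lambda>n. (diffs ^^ k) a n * z ^ n)" if "\<bar>z\<bar> < r" for k z
    using that
  proof (induction k arbitrary: z)
    case 0
    then show ?case using sa[of "x0 + z"] by (auto simp: sums_iff)
  next
    case (Suc k)
    show ?case using termdiff_converges[of z r "(diffs ^^ k) a"] Suc by auto
  qed
  have eq: "\<forall>z. \<bar>z\<bar> < r \<longrightarrow> D k (x0 + z) = (\<Sum>n. (diffs ^^ k) a n * z ^ n)" for k
  proof (induction k)
    case 0
    show ?case using sa by (auto simp: D0 sums_iff) (metis add_diff_cancel_left')
  next
    case (Suc k)
    show ?case
    proof (intro allI impI)
      fix z :: real assume z: "\<bar>z\<bar> < r"
      have d1: "((\<lambda>w. \<Sum>n. (diffs ^^ k) a n * w ^ n) has_field_derivative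
                 (\<Sum>n. diffs ((diffs ^^ k) a) n * z ^ n)) (at z)"
        by (rule termdiffs_strong'[of r]) (use sm z in auto)
      have d1': "((\<lambda>w. \<Sum>n. (diffs ^^ k) a n * w ^ n) has_field_derivative
                 (\<Sum>n. diffs ((diffs ^^ k) a) n * z ^ n)) (at ((\<lambda>y. y - x0) (x0 + z)))"
        using d1 by simp
      have d2: "((\<lambda>y. \<Sum>n. (diffs ^^ k) a n * (y - x0) ^ n) has_field_derivative
                 (\<Sum>n. diffs ((diffs ^^ k) a) n * z ^ n)) (at (x0 + z))"
      proof -
        have dd: "((\<lambda>y. y - x0) has_real_derivative 1) (at (x0 + z))"
          by (auto intro!: derivative_eq_intros)
        show ?thesis
          using DERIV_chain'[of "\<lambda>y. y - x0" 1 "x0 + z" UNIV "\<lambda>w. \<Sum>n. (diffs ^^ k) a n * w ^ n", OF dd d1']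
          by simp
      qed
      have d3: "(D k has_field_derivative (\<Sum>n. diffs ((diffs ^^ k) a) n * z ^ n)) (at (x0 + z))"
      proof (rule has_field_derivative_transform_within_open[OF d2, of "ball x0 r"])
        show "x0 + z \<in> ball x0 r" using z by (simp add: dist_real_def)
        fix x assume "x \<in> ball x0 r"
        then have "\<bar>x - x0\<bar> < r" by (simp add: dist_real_def abs_minus_commute)
        then show "(\<Sum>n. (diffs ^^ k) a n * (x - x0) ^ n) = D k x"
          using Suc[rule_format, of "x - x0"] by simp
      qed simp
      show "D (Suc k) (x0 + z) = (\<Sum>n. (diffs ^^ Suc k) a n * z ^ n)"
        using DERIV_imp_deriv[OF d3] by (simp add: DSuc)
    qed
  qed
  show thesis using that[OF r sm] eq by blast
qed

lemma D_deriv: "(D k has_field_derivative D (Suc k) y) (at y)"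
proof -
  obtain r a where r: "r > 0"
    and sm: "\<And>k z. \<bar>z\<bar> < r \<Longrightarrow> summable (\<lambda>n. (diffs ^^ k) a n * z ^ n)"
    and eq: "\<And>k z. \<bar>z\<bar> < r \<Longrightarrow> D k (y + z) = (\<Sum>n. (diffs ^^ k) a n * z ^ n)"
    using local_ps[of y] by blast
  have d1: "((\<lambda>w. \<Sum>n. (diffs ^^ k) a n * w ^ n) has_field_derivative
                 (\<Sum>n. diffs ((diffs ^^ k) a) n * 0 ^ n)) (at 0)"
    by (rule termdiffs_strong'[of r]) (use sm r in auto)
  have d1': "((\<lambda>w. \<Sum>n. (diffs ^^ k) a n * w ^ n) has_field_derivative
                 (\<Sum>n. diffs ((diffs ^^ k) a) n * 0 ^ n)) (at ((\<lambda>x. x - y) y))"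
    using d1 by simp
  have d2: "((\<lambda>x. \<Sum>n. (diffs ^^ k) a n * (x - y) ^ n) has_field_derivative
                 (\<Sum>n. diffs ((diffs ^^ k) a) n * 0 ^ n)) (at y)"
  proof -
    have dd: "((\<lambda>x. x - y) has_real_derivative 1) (at y)"
      by (auto intro!: derivative_eq_intros)
    show ?thesis
      using DERIV_chain'[of "\<lambda>x. x - y" 1 y UNIV "\<lambda>w. \<Sum>n. (diffs ^^ k) a n * w ^ n", OF dd d1']
      by simp
  qed
  have d3: "(D k has_field_derivative (\<Sum>n. diffs ((diffs ^^ k) a) n * 0 ^ n)) (at y)"
  proof (rule has_field_derivative_transform_within_open[OF d2, of "ball y r"])
    show "y \<in> ball y r" using r by simp
    fix x assume "x \<in> ball y r"
    then have "\<bar>x - y\<bar> < r" by (simp add: dist_real_def abs_minus_commute)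
    then show "(\<Sum>n. (diffs ^^ k) a n * (x - y) ^ n) = D k x"
      using eq[of "x - y" k] by simp
  qed simp
  moreover have "D (Suc k) y = (\<Sum>n. diffs ((diffs ^^ k) a) n * 0 ^ n)"
    using eq[of 0 "Suc k"] r by simp
  ultimately show ?thesis by simp
qed

end

context wf begin

lemma local_bound:
  fixes x0 :: real
  obtains \<rho> A R where "\<rho> > 0" "A \<ge> 0" "R > 0"
    "\<And>k y. \<bar>y - x0\<bar> < \<rho> \<Longrightarrow> \<bar>D k y\<bar> \<le> A * fact k * R ^ k"
proof -
  obtain r a where r: "r > 0"
    and sm: "\<And>k z. \<bar>z\<bar> < r \<Longrightarrow> summable (\<lambda>n. (diffs ^^ k) a n * z ^ n)"
    and eq: "\<And>k z. \<bar>z\<bar> < r \<Longrightarrow> D k (x0 + z) = (\<Sum>n. (diffs ^^ k) a n * z ^ n)"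
    using local_ps[of x0] by blast
  define \<rho>0 where "\<rho>0 = r / 2"
  have \<rho>0: "\<rho>0 > 0" "\<rho>0 < r" using r by (auto simp: \<rho>0_def)
  have "summable (\<lambda>n. a n * \<rho>0 ^ n)" using sm[of \<rho>0 0] \<rho>0 by simp
  then have "(\<lambda>n. a n * \<rho>0 ^ n) \<longlonglongrightarrow> 0" by (rule summable_LIMSEQ_zero)
  then have "convergent (\<lambda>n. a n * \<rho>0 ^ n)" by (auto simp: convergent_def)
  then have "Bseq (\<lambda>n. a n * \<rho>0 ^ n)" by (rule convergent_imp_Bseq)
  then obtain A where A: "A > 0" "\<And>n. \<bar>a n * \<rho>0 ^ n\<bar> \<le> A"
    unfolding Bseq_def by auto
  define R where "R = 2 / \<rho>0"
  have R: "R > 0" using \<rho>0 by (simp add: R_def)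
  show thesis
  proof (rule that[of "\<rho>0 / 4" "2 * A" R])
    show "\<rho>0 / 4 > 0" "2 * A \<ge> 0" "R > 0" using \<rho>0 A R by auto
    fix k y assume y: "\<bar>y - x0\<bar> < \<rho>0 / 4"
    define z where "z = y - x0"
    have z: "\<bar>z\<bar> < \<rho>0 / 4" using y by (simp add: z_def)
    have Dy: "D k y = (\<Sum>n. (diffs ^^ k) a n * z ^ n)"
      using eq[of z k] z \<rho>0 by (simp add: z_def)
    define g where "g n = A * fact k * R ^ k * (1/2) ^ n" for n
    have tb: "norm ((diffs ^^ k) a n * z ^ n) \<le> g n" for n
    proof -
      have bf: "fact (n + k) = fact k * fact n * real ((n + k) choose k)"
        using binomial_fact_lemma[of k "n + k"] by (metis add_diff_cancel_right' le_add2 mult.commute of_nat_fact of_nat_mult)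
      have ch: "real ((n + k) choose k) \<le> 2 ^ (n + k)"
        using binomial_le_pow2[of "n + k" k] by (metis of_nat_le_iff of_nat_numeral of_nat_power)
      have aa: "\<bar>a (n + k)\<bar> \<le> A / \<rho>0 ^ (n + k)"
        using A(2)[of "n + k"] \<rho>0 by (simp add: abs_mult field_simps)
      have zz: "\<bar>z\<bar> ^ n \<le> (\<rho>0 / 4) ^ n" using z by (intro power_mono) auto
      have "norm ((diffs ^^ k) a n * z ^ n) = fact (n + k) / fact n * \<bar>a (n + k)\<bar> * \<bar>z\<bar> ^ n"
        by (simp add: diffs_iter abs_mult power_abs)
      also have "\<dots> = fact k * real ((n + k) choose k) * \<bar>a (n + k)\<bar> * \<bar>z\<bar> ^ n"
        by (simp add: bf)
      also have "\<dots> \<le> fact k * 2 ^ (n + k) * (A / \<rho>0 ^ (n + k)) * (\<rho>0 / 4) ^ n"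
        by (intro mult_mono ch aa zz) (use A \<rho>0 in auto)
      also have "\<dots> = g n"
        using \<rho>0 by (simp add: g_def R_def power_add power_divide field_simps)
          (simp add: power_mult_distrib[symmetric])
      finally show ?thesis .
    qed
    have sg: "summable g" unfolding g_def
      by (intro summable_mult summable_geometric) simp
    have "\<bar>D k y\<bar> \<le> suminf g" unfolding Dy
      using norm_suminf_le[OF tb sg] by simp
    also have "suminf g = 2 * A * fact k * R ^ k"
    proof -
      have "g sums (A * fact k * R ^ k * 2)" unfolding g_def
        using sums_mult[OF geometric_sums[of "1/2::real"], of "A * fact k * R ^ k"] by simp
      then show ?thesis by (simp add: sums_iff)
    qed
    finally show "\<bar>D k y\<bar> \<le> 2 * A * fact k * R ^ k" .
  qed
qed

end

context wf begin

lemma D_cont: "continuous_on S (D k)"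
  using D_deriv by (meson DERIV_isCont continuous_at_imp_continuous_on)

lemma D_per: "D k (y + 1) = D k y"
proof (induction k arbitrary: y)
  case 0 then show ?case using per by (simp add: D0)
next
  case (Suc k)
  have fe: "D k = (\<lambda>y. D k (y + 1))" using Suc by auto
  have dd: "((\<lambda>y. y + 1) has_real_derivative 1) (at y)" by (auto intro!: derivative_eq_intros)
  have "((\<lambda>y. D k (y + 1)) has_field_derivative D (Suc k) (y + 1)) (at y)"
    using DERIV_chain'[OF dd D_deriv[of k "y + 1"]] by simp
  then have "(D k has_field_derivative D (Suc k) (y + 1)) (at y)" using fe by simp
  then show ?case using D_deriv[of k y] DERIV_unique by blast
qed

lemma D_per_nat: "D k (y + real n) = D k y"
proof (induction n)
  case (Suc n)
  have "y + real (Suc n) = (y + real n) + 1" by simp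
  then show ?case using D_per[of k "y + real n"] Suc by metis
qed simp

lemma D_per_int: "D k (y + real_of_int m) = D k y"
proof (cases "m \<ge> 0")
  case True
  then show ?thesis using D_per_nat[of k y "nat m"] by simp
next
  case False
  then show ?thesis using D_per_nat[of k "y + real_of_int m" "nat (- m)"] by simp
qed

lemma D_bound01:
  obtains M R where "M \<ge> 0" "R > 0" "\<And>k y. y \<in> {0..1} \<Longrightarrow> \<bar>D k y\<bar> \<le> M * fact k * R ^ k"
proof -
  have "\<forall>x0. \<exists>\<rho> A R. \<rho> > 0 \<and> A \<ge> 0 \<and> R > 0 \<and> (\<forall>k y. \<bar>y - x0\<bar> < \<rho> \<longrightarrow> \<bar>D k y\<bar> \<le> A * fact k * R ^ k)"
    by (metis local_bound)
  then obtain \<rho> A R where H: "\<And>x0. \<rho> x0 > 0" "\<And>x0. A x0 \<ge> 0" "\<And>x0. R x0 > 0"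
    "\<And>x0 k y. \<bar>y - x0\<bar> < \<rho> x0 \<Longrightarrow> \<bar>D k y\<bar> \<le> A x0 * fact k * R x0 ^ k"
    by metis
  obtain C where C: "C \<subseteq> {0..1}" "finite C" "{0..1::real} \<subseteq> (\<Union>c\<in>C. ball c (\<rho> c))"
    using compactE_image[of "{0..1::real}" "{0..1}" "\<lambda>c. ball c (\<rho> c)"] H(1) by force
  define M where "M = (\<Sum>c\<in>C. A c)"
  define RR where "RR = 1 + (\<Sum>c\<in>C. R c)"
  show thesis
  proof (rule that[of M RR])
    show "M \<ge> 0" unfolding M_def using H(2) by (simp add: sum_nonneg)
    show "RR > 0" unfolding RR_def using H(3) by (smt (verit) sum_nonneg)
    fix k and y :: real assume "y \<in> {0..1}"
    then obtain c where c: "c \<in> C" "\<bar>y - c\<bar> < \<rho> c" using C(3) by (force simp: dist_real_def abs_minus_commute)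
    have "\<bar>D k y\<bar> \<le> A c * fact k * R c ^ k" using H(4) c by blast
    also have "\<dots> \<le> M * fact k * RR ^ k"
    proof (intro mult_mono power_mono)
      show "A c \<le> M" unfolding M_def using C(2) c(1) H(2) by (intro member_le_sum) auto
      have "R c \<le> (\<Sum>c\<in>C. R c)" using C(2) c(1) H(3) by (intro member_le_sum) (auto intro: less_imp_le)
      then show "R c \<le> RR" unfolding RR_def by simp
    qed (use H(2,3) \<open>M \<ge> 0\<close> in \<open>auto intro: less_imp_le\<close>)
    finally show "\<bar>D k y\<bar> \<le> M * fact k * RR ^ k" .
  qed
qed

lemma D_bound:
  obtains M R where "M > 0" "R \<ge> 1" "\<And>k y. \<bar>D k y\<bar> \<le> M * fact k * R ^ k"
proof -
  obtain M R where MR: "M \<ge> 0" "R > 0" "\<And>k y. y \<in> {0..1} \<Longrightarrow> \<bar>D k y\<bar> \<le> M * fact k * R ^ k"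
    using D_bound01 by blast
  show thesis
  proof (rule that[of "M + 1" "R + 1"])
    show "M + 1 > 0" "R + 1 \<ge> 1" using MR by auto
    fix k y
    have "D k y = D k ((y - real_of_int \<lfloor>y\<rfloor>) + real_of_int \<lfloor>y\<rfloor>)" by simp
    also have "\<dots> = D k (y - real_of_int \<lfloor>y\<rfloor>)" by (rule D_per_int)
    finally have e: "D k y = D k (y - real_of_int \<lfloor>y\<rfloor>)" .
    have "real_of_int \<lfloor>y\<rfloor> \<le> y" "y < real_of_int \<lfloor>y\<rfloor> + 1"
      by (rule of_int_floor_le, rule real_of_int_floor_add_one_gt)
    then have "y - real_of_int \<lfloor>y\<rfloor> \<in> {0..1}" unfolding atLeastAtMost_iff by linarith
    then have "\<bar>D k y\<bar> \<le> M * fact k * R ^ k" using MR(3) e by simp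
    also have "\<dots> \<le> (M + 1) * fact k * (R + 1) ^ k"
      using MR by (intro mult_mono power_mono) auto
    finally show "\<bar>D k y\<bar> \<le> (M + 1) * fact k * (R + 1) ^ k" .
  qed
qed

end

context wf begin

definition MR :: "real \<times> real" where
  "MR = (SOME p. fst p > 0 \<and> snd p \<ge> 1 \<and> (\<forall>k y. \<bar>D k y\<bar> \<le> fst p * fact k * snd p ^ k))"

definition Bd :: "nat \<Rightarrow> real" where "Bd k = fst MR * fact k * snd MR ^ k"

lemma MR: "fst MR > 0" "snd MR \<ge> 1" "\<bar>D k y\<bar> \<le> Bd k"
proof -
  have "\<exists>p. fst p > 0 \<and> snd p \<ge> 1 \<and> (\<forall>k y. \<bar>D k y\<bar> \<le> fst p * fact k * snd p ^ k)"
    using D_bound by (metis fst_conv snd_conv)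
  from someI_ex[OF this] show "fst MR > 0" "snd MR \<ge> 1" "\<bar>D k y\<bar> \<le> Bd k"
    unfolding MR_def[symmetric] Bd_def by auto
qed

lemma Bd_pos: "Bd k > 0" using MR unfolding Bd_def by auto

definition arg :: "(nat \<Rightarrow> nat) \<Rightarrow> nat \<Rightarrow> real \<Rightarrow> real" where
  "arg s n y = (y + (\<Sum>i\<le>n. real (s i) * real b ^ i)) / real b ^ Suc n"

definition tm :: "nat \<Rightarrow> (nat \<Rightarrow> nat) \<Rightarrow> nat \<Rightarrow> real \<Rightarrow> real" where
  "tm r s n y = \<gamma> ^ n * (1 / real b ^ Suc n) ^ r * D r (arg s n y)"

definition Gi :: "nat \<Rightarrow> (nat \<Rightarrow> nat) \<Rightarrow> real \<Rightarrow> real" where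
  "Gi r s y = (\<Sum>n. tm r s n y)"

definition Gf :: "nat \<Rightarrow> (nat \<Rightarrow> nat) \<Rightarrow> nat \<Rightarrow> real \<Rightarrow> real" where
  "Gf r s N y = (\<Sum>n<N. tm r s n y)"

lemma bpos: "real b > 0" using b2 by simp

lemma tm_deriv: "(tm r s n has_real_derivative tm (Suc r) s n y) (at y)"
proof -
  have da: "(arg s n has_real_derivative (1 / real b ^ Suc n)) (at y)"
    unfolding arg_def using bpos by (auto intro!: derivative_eq_intros simp: field_simps)
  have "((\<lambda>y. D r (arg s n y)) has_real_derivative D (Suc r) (arg s n y) * (1 / real b ^ Suc n)) (at y)"
    using DERIV_chain'[OF da D_deriv[of r "arg s n y"]] by simp
  then have "((\<lambda>y. \<gamma> ^ n * (1 / real b ^ Suc n) ^ r * D r (arg s n y)) has_real_derivative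
      \<gamma> ^ n * (1 / real b ^ Suc n) ^ r * (D (Suc r) (arg s n y) * (1 / real b ^ Suc n))) (at y)"
    by (rule DERIV_cmult)
  then show ?thesis unfolding tm_def[abs_def] by (simp add: field_simps)
qed

lemma tm_bound: "\<bar>tm r s n y\<bar> \<le> \<gamma> ^ n * Bd r"
proof -
  have "real b ^ Suc n \<ge> 1" using b2 by (intro one_le_power) auto
  then have q: "0 \<le> 1 / real b ^ Suc n" "1 / real b ^ Suc n \<le> 1" by auto
  have c: "(1 / real b ^ Suc n) ^ r \<le> 1" "(1 / real b ^ Suc n) ^ r \<ge> 0"
    by (rule power_le_one[OF q], rule zero_le_power[OF q(1)])
  have "\<bar>tm r s n y\<bar> = \<gamma> ^ n * (1 / real b ^ Suc n) ^ r * \<bar>D r (arg s n y)\<bar>"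
    unfolding tm_def using g0 c by (simp add: abs_mult)
  also have "\<dots> \<le> \<gamma> ^ n * 1 * Bd r"
    using c g0 MR(3)[of r] by (intro mult_mono) auto
  finally show ?thesis by simp
qed

lemma sum_geo: "summable (\<lambda>n. \<gamma> ^ n * c)" "(\<Sum>n. \<gamma> ^ n * c) = c / (1 - \<gamma>)"
proof -
  show "summable (\<lambda>n. \<gamma> ^ n * c)" using g0 g1 by (intro summable_mult2 summable_geometric) auto
  show "(\<Sum>n. \<gamma> ^ n * c) = c / (1 - \<gamma>)"
    using suminf_mult2[of "\<lambda>n. \<gamma> ^ n" c] g0 g1 suminf_geometric[of \<gamma>] summable_geometric[of \<gamma>]
    by (simp add: field_simps)
qed

lemma tm_summable: "summable (\<lambda>n. tm r s n y)"
  by (rule summable_comparison_test[OF _ sum_geo(1)[of "Bd r"]]) (use tm_bound in auto)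

lemma Gi_bound: "\<bar>Gi r s y\<bar> \<le> Bd r / (1 - \<gamma>)"
  unfolding Gi_def using norm_suminf_le[of "\<lambda>n. tm r s n y" "\<lambda>n. \<gamma> ^ n * Bd r"] tm_bound sum_geo
  by auto

lemma Gi_deriv: "(Gi r s has_real_derivative Gi (Suc r) s y) (at y)"
proof -
  have "((\<lambda>y. \<Sum>n. tm r s n y) has_field_derivative (\<Sum>n. tm (Suc r) s n y)) (at y)"
  proof (rule has_field_derivative_series'(2)[of UNIV])
    show "uniformly_convergent_on UNIV (\<lambda>n y. \<Sum>i<n. tm (Suc r) s i y)"
      by (rule Weierstrass_m_test'[OF _ sum_geo(1)[of "Bd (Suc r)"]]) (use tm_bound in auto)
    show "summable (\<lambda>n. tm r s n 0)" by (rule tm_summable)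
  qed (auto intro: tm_deriv)
  then show ?thesis unfolding Gi_def[abs_def] by simp
qed

lemma Gf_deriv: "(Gf r s N has_real_derivative Gf (Suc r) s N y) (at y)"
  unfolding Gf_def[abs_def] by (rule DERIV_sum) (rule tm_deriv)

lemma Gf_bound: "\<bar>Gf r s N y\<bar> \<le> Bd r / (1 - \<gamma>)"
proof -
  have "\<bar>Gf r s N y\<bar> \<le> (\<Sum>n<N. \<gamma> ^ n * Bd r)"
    unfolding Gf_def by (rule order_trans[OF sum_abs sum_mono]) (rule tm_bound)
  also have "\<dots> \<le> (\<Sum>n. \<gamma> ^ n * Bd r)"
    by (rule sum_le_suminf[OF sum_geo(1)]) (auto intro!: mult_nonneg_nonneg less_imp_le[OF Bd_pos] simp: g0 less_imp_le)
  finally show ?thesis using sum_geo(2) by simp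
qed

lemma tail_bound: "\<bar>Gi r s y - Gf r s N y\<bar> \<le> \<gamma> ^ N * Bd r / (1 - \<gamma>)"
proof -
  have "Gi r s y = (\<Sum>n. tm r s (n + N) y) + Gf r s N y"
    unfolding Gi_def Gf_def by (rule suminf_split_initial_segment[OF tm_summable])
  then have "\<bar>Gi r s y - Gf r s N y\<bar> = \<bar>\<Sum>n. tm r s (n + N) y\<bar>" by simp
  also have "\<dots> \<le> (\<Sum>n. \<gamma> ^ n * (\<gamma> ^ N * Bd r))"
  proof (rule norm_suminf_le[of "\<lambda>n. tm r s (n + N) y" "\<lambda>n. \<gamma> ^ n * (\<gamma> ^ N * Bd r)", simplified])
    show "summable (\<lambda>n. \<gamma> ^ n * (\<gamma> ^ N * Bd r))" by (rule sum_geo)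
    fix n show "\<bar>tm r s (n + N) y\<bar> \<le> \<gamma> ^ n * (\<gamma> ^ N * Bd r)"
      using tm_bound[of r s "n + N" y] by (simp add: power_add mult.assoc)
  qed
  also have "\<dots> = \<gamma> ^ N * Bd r / (1 - \<gamma>)" using sum_geo(2) by simp
  finally show ?thesis .
qed

lemma arg_cong': "(\<And>i. i \<le> n \<Longrightarrow> s i = t i) \<Longrightarrow> arg s n y = arg t n y"
  unfolding arg_def by (intro arg_cong2[where f="(/)"] refl arg_cong2[where f="(+)"] sum.cong) auto

lemma Gf_cong: "(\<And>i. i < N \<Longrightarrow> s i = t i) \<Longrightarrow> Gf r s N y = Gf r t N y"
proof -
  assume a: "\<And>i. i < N \<Longrightarrow> s i = t i"
  have "arg s n y = arg t n y" if "n < N" for n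
    by (rule arg_cong') (use a that in auto)
  then show ?thesis unfolding Gf_def tm_def by simp
qed

lemma S_inf_eq: "S_inf b \<gamma> \<phi> x s = Gi 0 s x"
  unfolding S_inf_def Gi_def tm_def arg_def D0
  by (simp only: One_nat_def sum.atLeast1_atMost_eq diff_Suc_Suc diff_zero lessThan_Suc_atMost power_0 mult_1_right)

lemma S_fin_eq: "S_fin b \<gamma> \<phi> x js = Gf 0 (\<lambda>i. js ! i) (length js) x"
  unfolding S_fin_def Gf_def tm_def arg_def D0
  by (simp only: One_nat_def sum.atLeast1_atMost_eq diff_Suc_Suc diff_zero lessThan_Suc_atMost power_0 mult_1_right)

lemma ci: "continuous_on (UNIV::((nat\<Rightarrow>nat)\<times>real) set) (\<lambda>p. real (fst p i))"
proof -
  have c1: "continuous_on (UNIV::((nat\<Rightarrow>nat)\<times>real) set) (\<lambda>p. fst p i)"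
    by (rule continuous_on_compose2[OF continuous_on_product_coordinates[of i] continuous_on_fst[OF continuous_on_id]]) simp
  have c2: "continuous_on (UNIV::nat set) real" by (rule Topological_Spaces.continuous_on_discrete)
  show ?thesis by (rule continuous_on_compose2[OF c2 c1]) simp
qed
lemma ca: "continuous_on (UNIV::((nat\<Rightarrow>nat)\<times>real) set) (\<lambda>p. arg (fst p) n (snd p))"
proof -
  have "continuous_on (UNIV::((nat\<Rightarrow>nat)\<times>real) set) (\<lambda>p. (snd p + (\<Sum>i\<le>n. real (fst p i) * real b ^ i)) / real b ^ Suc n)"
    by (intro continuous_on_divide continuous_on_add continuous_on_snd continuous_on_id continuous_on_sum continuous_on_mult ci continuous_on_const) (use bpos in auto)
  then show ?thesis unfolding arg_def .
qed
lemma tm_cont: "continuous_on (UNIV::((nat\<Rightarrow>nat)\<times>real) set) (\<lambda>p. tm r (fst p) n (snd p))"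
  unfolding tm_def
  by (intro continuous_on_mult continuous_on_const continuous_on_compose2[OF D_cont ca]) auto

lemma Gi_cont: "continuous_on (UNIV::((nat\<Rightarrow>nat)\<times>real) set) (\<lambda>p. Gi r (fst p) (snd p))"
proof -
  have ul: "uniform_limit (UNIV::((nat\<Rightarrow>nat)\<times>real) set) (\<lambda>n p. \<Sum>i<n. tm r (fst p) i (snd p))
     (\<lambda>p. \<Sum>i. tm r (fst p) i (snd p)) sequentially"
    by (rule Weierstrass_m_test[OF _ sum_geo(1)[of "Bd r"]]) (use tm_bound in auto)
  have ev: "\<forall>\<^sub>F n in sequentially. continuous_on (UNIV::((nat\<Rightarrow>nat)\<times>real) set) (\<lambda>p. \<Sum>i<n. tm r (fst p) i (snd p))"
    by (intro always_eventually allI continuous_on_sum tm_cont)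
  show ?thesis unfolding Gi_def
    by (rule uniform_limit_theorem[OF ev ul]) simp
qed

end


lemma fact_add_le: "fact (j + n) \<le> fact j * fact n * (2::real) ^ (j + n)"
proof -
  have bf: "fact (n + j) = fact j * fact n * real ((n + j) choose j)"
    using binomial_fact_lemma[of j "n + j"] by (metis add_diff_cancel_right' le_add2 mult.commute of_nat_fact of_nat_mult)
  have ch: "real ((n + j) choose j) \<le> 2 ^ (n + j)"
    using binomial_le_pow2[of "n + j" j] by (metis of_nat_le_iff of_nat_numeral of_nat_power)
  show ?thesis using bf ch by (simp add: add.commute mult_left_mono)
qed

lemma zero_if_geo_small:
  fixes a K :: real
  assumes "\<And>n. n > 0 \<Longrightarrow> \<bar>a\<bar> \<le> K * (1/2) ^ n"
  shows "a = 0"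
proof (rule ccontr)
  assume "a \<noteq> 0"
  then have "\<bar>a\<bar> > 0" by simp
  have "\<bar>a\<bar> \<le> K * (1/2)" using assms[of 1] by simp
  then have K: "K \<ge> 0" using \<open>\<bar>a\<bar> > 0\<close> by linarith
  obtain n where n: "(1/2::real) ^ n < \<bar>a\<bar> / (K + 1)"
    using real_arch_pow_inv[of "\<bar>a\<bar> / (K + 1)" "1/2"] \<open>\<bar>a\<bar> > 0\<close> K by auto
  have "K * (1/2) ^ Suc n \<le> (K + 1) * (1/2) ^ n"
    using K by (intro mult_mono) (auto simp: power_le_one)
  also have "\<dots> < \<bar>a\<bar>" using n K by (simp add: field_simps)
  finally show False using assms[of "Suc n"] by simp
qed

lemma ident_local:
  fixes F :: "nat \<Rightarrow> real \<Rightarrow> real"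
  assumes der: "\<And>r y. (F r has_real_derivative F (Suc r) y) (at y)"
    and bd: "\<And>r y. \<bar>F r y\<bar> \<le> C * fact r * R ^ r"
    and R: "R > 0"
    and z: "\<And>r. F r y0 = 0"
    and x: "\<bar>x - y0\<bar> < 1 / (4 * R)"
  shows "F j x = 0"
proof (cases "x = y0")
  case True then show ?thesis using z by simp
next
  case False
  have C: "C \<ge> 0" using bd[of 0 y0] by simp
  show ?thesis
  proof (rule zero_if_geo_small[where K = "C * fact j * (2 * R) ^ j"])
    fix n :: nat assume "n > 0"
    have "\<exists>t. (if x < y0 then x < t \<and> t < y0 else y0 < t \<and> t < x) \<and>
      F j x = (\<Sum>m<n. (F (j + m) y0 / fact m) * (x - y0) ^ m) + (F (j + n) t / fact n) * (x - y0) ^ n"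
    proof (rule Taylor[of n "\<lambda>m. F (j + m)" "F j" "min x y0" "max x y0" y0 x])
      show "\<forall>m t. m < n \<and> min x y0 \<le> t \<and> t \<le> max x y0 \<longrightarrow>
          (F (j + m) has_real_derivative F (j + Suc m) t) (at t)"
        using der by simp
    qed (use \<open>n > 0\<close> False in auto)
    then obtain t where t: "F j x = (\<Sum>m<n. (F (j + m) y0 / fact m) * (x - y0) ^ m) + (F (j + n) t / fact n) * (x - y0) ^ n"
      by blast
    have "F j x = (F (j + n) t / fact n) * (x - y0) ^ n" using t z by simp
    then have "\<bar>F j x\<bar> = \<bar>F (j + n) t\<bar> / fact n * \<bar>x - y0\<bar> ^ n" by (simp add: abs_mult power_abs)
    also have "\<dots> \<le> (C * fact (j + n) * R ^ (j + n)) / fact n * (1 / (4 * R)) ^ n"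
      using bd[of "j + n" t] x by (intro mult_mono divide_right_mono power_mono) auto
    also have "\<dots> \<le> (C * (fact j * fact n * 2 ^ (j + n)) * R ^ (j + n)) / fact n * (1 / (4 * R)) ^ n"
      using fact_add_le[of j n] C R by (intro mult_right_mono divide_right_mono mult_left_mono) auto
    also have "\<dots> = C * fact j * (2 * R) ^ j * (1/2) ^ n"
      using R by (simp add: power_add power_mult_distrib field_simps)
        (simp add: power_mult_distrib[symmetric])
    finally show "\<bar>F j x\<bar> \<le> C * fact j * (2 * R) ^ j * (1/2) ^ n" .
  qed
qed

lemma ident:
  fixes F :: "nat \<Rightarrow> real \<Rightarrow> real"
  assumes der: "\<And>r y. (F r has_real_derivative F (Suc r) y) (at y)"
    and bd: "\<And>r y. \<bar>F r y\<bar> \<le> C * fact r * R ^ r"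
    and R: "R > 0"
    and z: "\<And>r. F r y0 = 0"
  shows "F 0 x = 0"
proof -
  define \<rho> where "\<rho> = 1 / (4 * R)"
  have \<rho>: "\<rho> > 0" using R by (simp add: \<rho>_def)
  have step: "\<And>j. F j x' = 0" if "\<And>r. F r z' = 0" "\<bar>x' - z'\<bar> < \<rho>" for x' z'
    using ident_local[OF der bd R, of z' x'] that by (simp add: \<rho>_def)
  have main: "\<forall>x. \<bar>x - y0\<bar> \<le> real k * (\<rho> / 2) \<longrightarrow> (\<forall>j. F j x = 0)" for k
  proof (induction k)
    case 0 then show ?case using z by simp
  next
    case (Suc k)
    show ?case
    proof (intro allI impI)
      fix x j assume xk: "\<bar>x - y0\<bar> \<le> real (Suc k) * (\<rho> / 2)"
      define x' where "x' = y0 + (x - y0) * real k / real (Suc k)"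
      have "\<bar>x' - y0\<bar> = \<bar>x - y0\<bar> * real k / real (Suc k)" by (simp add: x'_def abs_mult)
      also have "\<dots> \<le> real (Suc k) * (\<rho> / 2) * real k / real (Suc k)"
        using xk by (intro divide_right_mono mult_right_mono) auto
      also have "\<dots> = real k * (\<rho> / 2)" by (auto simp: field_simps simp del: of_nat_Suc)
      finally have "\<forall>j. F j x' = 0" using Suc by blast
      moreover have "\<bar>x - x'\<bar> < \<rho>"
      proof -
        have "x - x' = (x - y0) / real (Suc k)" by (simp add: x'_def field_simps)
        then have "\<bar>x - x'\<bar> = \<bar>x - y0\<bar> / real (Suc k)" by simp
        also have "\<dots> \<le> \<rho> / 2" using xk by (simp add: field_simps)
        finally show ?thesis using \<rho> by simp
      qed
      ultimately show "F j x = 0" using step by blast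
    qed
  qed
  obtain k where "\<bar>x - y0\<bar> / (\<rho> / 2) \<le> real k" using real_arch_simple by blast
  then have "\<bar>x - y0\<bar> \<le> real k * (\<rho> / 2)" using \<rho> by (simp add: field_simps)
  then show ?thesis using main by blast
qed


context wf begin

definition Sb :: "nat \<Rightarrow> (nat \<Rightarrow> nat) set" where
  "Sb i = PiE UNIV (\<lambda>k. if k = 0 then {i} else {..<b})"

lemma compact_Sb: "compact (Sb i)"
proof -
  have "compactin (product_topology (\<lambda>_. euclidean) UNIV) (Sb i)"
    unfolding Sb_def compactin_PiE by (auto intro: finite_imp_compact)
  then show ?thesis by (simp add: euclidean_product_topology)
qed

definition KK :: "((nat \<Rightarrow> nat) \<times> (nat \<Rightarrow> nat) \<times> real) set" where
  "KK = (\<Union>i\<in>{..<b}. \<Union>j\<in>{..<b} - {i}. Sb i \<times> Sb j \<times> {0..1})"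

lemma compact_KK: "compact KK"
  unfolding KK_def
  by (intro compact_UN compact_Times compact_Sb compact_Icc) auto

lemma KK_iff: "(s, t, y) \<in> KK \<longleftrightarrow> s \<in> Sigma_b b \<and> t \<in> Sigma_b b \<and> s 0 \<noteq> t 0 \<and> y \<in> {0..1}"
proof
  assume "(s, t, y) \<in> KK"
  then obtain i j where "i < b" "j < b" "i \<noteq> j" "s \<in> Sb i" "t \<in> Sb j" "y \<in> {0..1}"
    unfolding KK_def by auto
  then show "s \<in> Sigma_b b \<and> t \<in> Sigma_b b \<and> s 0 \<noteq> t 0 \<and> y \<in> {0..1}"
    unfolding Sb_def Sigma_b_def PiE_def Pi_def by (auto split: if_splits)
next
  assume a: "s \<in> Sigma_b b \<and> t \<in> Sigma_b b \<and> s 0 \<noteq> t 0 \<and> y \<in> {0..1}"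
  then have "s \<in> Sb (s 0)" "t \<in> Sb (t 0)" "s 0 < b" "t 0 < b"
    unfolding Sb_def Sigma_b_def PiE_def Pi_def by auto
  then show "(s, t, y) \<in> KK" unfolding KK_def using a by (intro UN_I[of "s 0"] UN_I[of "t 0"]) auto
qed

definition Dl :: "nat \<Rightarrow> (nat \<Rightarrow> nat) \<times> (nat \<Rightarrow> nat) \<times> real \<Rightarrow> real" where
  "Dl r p = Gi r (fst p) (snd (snd p)) - Gi r (fst (snd p)) (snd (snd p))"

lemma Dl_cont: "continuous_on UNIV (Dl r)"
proof -
  have c1: "continuous_on UNIV (\<lambda>p::(nat \<Rightarrow> nat) \<times> (nat \<Rightarrow> nat) \<times> real. Gi r (fst p) (snd (snd p)))"
    by (rule continuous_on_compose2[OF Gi_cont, of UNIV "\<lambda>p. (fst p, snd (snd p))", simplified])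
       (intro continuous_intros)
  have c2: "continuous_on UNIV (\<lambda>p::(nat \<Rightarrow> nat) \<times> (nat \<Rightarrow> nat) \<times> real. Gi r (fst (snd p)) (snd (snd p)))"
    by (rule continuous_on_compose2[OF Gi_cont, of UNIV "\<lambda>p. (fst (snd p), snd (snd p))", simplified])
       (intro continuous_intros)
  show ?thesis unfolding Dl_def[abs_def] by (intro continuous_on_diff c1 c2)
qed

lemma nondeg_inf:
  assumes H: "cond_H b \<gamma> \<phi>"
  shows "\<exists>m c. c > 0 \<and> (\<forall>s t y. (s, t, y) \<in> KK \<longrightarrow> (\<exists>r\<le>m. \<bar>Dl r (s, t, y)\<bar> \<ge> c))"
proof (rule ccontr)
  assume na: "\<not> ?thesis"
  define C where "C m = {p. \<forall>r\<le>m. \<bar>Dl r p\<bar> \<le> 1 / (real m + 1)}" for m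
  have clC: "closed (C m)" for m
  proof -
    have "C m = (\<Inter>r\<in>{..m}. {p. \<bar>Dl r p\<bar> \<le> 1 / (real m + 1)})" unfolding C_def by auto
    moreover have "closed {p. \<bar>Dl r p\<bar> \<le> 1 / (real m + 1)}" for r
      by (rule closed_Collect_le) (intro continuous_intros Dl_cont)+
    ultimately show ?thesis by auto
  qed
  have ne: "KK \<inter> C m \<noteq> {}" for m
  proof -
    have cpos: "1 / (real m + 1) > 0" by simp
    from na have "\<not> (\<forall>s t y. (s, t, y) \<in> KK \<longrightarrow> (\<exists>r\<le>m. \<bar>Dl r (s, t, y)\<bar> \<ge> 1 / (real m + 1)))"
      using cpos by blast
    then obtain s t y where "(s, t, y) \<in> KK" "\<forall>r\<le>m. \<bar>Dl r (s, t, y)\<bar> < 1 / (real m + 1)"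
      by (meson not_le)
    then have "\<exists>p\<in>KK. \<forall>r\<le>m. \<bar>Dl r p\<bar> < 1 / (real m + 1)" by blast
    then show ?thesis unfolding C_def by (auto intro: less_imp_le)
  qed
  have mono: "C M \<subseteq> C m" if "m \<le> M" for m M
  proof
    fix p assume "p \<in> C M"
    then have "\<bar>Dl r p\<bar> \<le> 1 / (real M + 1)" if "r \<le> m" for r using that \<open>m \<le> M\<close> unfolding C_def by auto
    moreover have "1 / (real M + 1) \<le> 1 / (real m + 1)" using that by (simp add: frac_le)
    ultimately show "p \<in> C m" unfolding C_def by force
  qed
  have "KK \<inter> (\<Inter>m. C m) \<noteq> {}"
  proof (rule compact_imp_fip_image[OF compact_KK clC])
    fix I' :: "nat set" assume "finite I'"
    then obtain M where "\<forall>m\<in>I'. m \<le> M" using finite_nat_set_iff_bounded_le by blast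
    then have "C M \<subseteq> (\<Inter>m\<in>I'. C m)" using mono by blast
    then show "KK \<inter> (\<Inter>m\<in>I'. C m) \<noteq> {}" using ne[of M] by blast
  qed
  then obtain s t y where p: "(s, t, y) \<in> KK" "\<And>m. (s, t, y) \<in> C m" by (auto simp del: C_def) blast
  have z: "Dl r (s, t, y) = 0" for r
  proof (rule ccontr)
    assume "Dl r (s, t, y) \<noteq> 0"
    then obtain n where n: "n > 0" "inverse (real n) < \<bar>Dl r (s, t, y)\<bar>"
      using ex_inverse_of_nat_less[of "\<bar>Dl r (s, t, y)\<bar>"] by auto
    have "\<bar>Dl r (s, t, y)\<bar> \<le> 1 / (real (max r n) + 1)" using p(2)[of "max r n"] unfolding C_def by auto
    also have "\<dots> \<le> inverse (real n)" using n(1) by (simp add: frac_le inverse_eq_divide)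
    finally show False using n by simp
  qed
  define F where "F r x = Gi r s x - Gi r t x" for r x
  have Fd: "(F r has_real_derivative F (Suc r) x) (at x)" for r x
    unfolding F_def[abs_def] by (intro DERIV_diff Gi_deriv)
  have Fb: "\<bar>F r x\<bar> \<le> (2 * fst MR / (1 - \<gamma>)) * fact r * snd MR ^ r" for r x
  proof -
    have "\<bar>F r x\<bar> \<le> \<bar>Gi r s x\<bar> + \<bar>Gi r t x\<bar>" unfolding F_def by simp
    also have "\<dots> \<le> Bd r / (1 - \<gamma>) + Bd r / (1 - \<gamma>)" by (intro add_mono Gi_bound)
    finally show ?thesis by (simp add: Bd_def field_simps)
  qed
  have Fz: "F r y = 0" for r using z[of r] unfolding F_def Dl_def by simp
  have all0: "F 0 x = 0" for x
    by (rule ident[OF Fd Fb _ Fz]) (use MR in auto)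
  have st: "s \<in> Sigma_b b" "t \<in> Sigma_b b" "s \<noteq> t" using p(1) KK_iff by auto
  then obtain x where "x \<in> {0..1}" "S_inf b \<gamma> \<phi> x t - S_inf b \<gamma> \<phi> x s \<noteq> 0"
    using H unfolding cond_H_def by metis
  then show False using all0[of x] unfolding F_def S_inf_eq by simp
qed

end


lemma mvt_lower:
  fixes f f' :: "real \<Rightarrow> real"
  assumes der: "\<And>y. (f has_real_derivative f' y) (at y)"
    and J: "is_interval J" and x: "x \<in> J" and y: "y \<in> J"
    and lb: "\<And>z. z \<in> J \<Longrightarrow> \<bar>f' z\<bar> \<ge> c"
  shows "\<bar>f x - f y\<bar> \<ge> c * \<bar>x - y\<bar>"
proof -
  have gen: "\<bar>f v - f u\<bar> \<ge> c * \<bar>v - u\<bar>" if "u \<in> J" "v \<in> J" "u < v" for u v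
  proof -
    obtain z where z: "u < z" "z < v" "f v - f u = (v - u) * f' z"
      using MVT2[OF \<open>u < v\<close>, of f f'] der by blast
    have "z \<in> J" using J that z unfolding is_interval_1 by (meson less_imp_le)
    then have "\<bar>f' z\<bar> \<ge> c" by (rule lb)
    then have "\<bar>v - u\<bar> * \<bar>f' z\<bar> \<ge> \<bar>v - u\<bar> * c" by (intro mult_left_mono) auto
    then show ?thesis using z by (simp add: abs_mult mult.commute)
  qed
  show ?thesis
  proof (cases x y rule: linorder_cases)
    case less then show ?thesis using gen[OF x y] by (simp add: abs_minus_commute)
  next
    case equal then show ?thesis by simp
  next
    case greater then show ?thesis using gen[OF y x] by (simp add: abs_minus_commute)
  qed
qed

lemma mvt_upper:
  fixes f f' :: "real \<Rightarrow> real"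
  assumes der: "\<And>y. (f has_real_derivative f' y) (at y)"
    and J: "is_interval J" and x: "x \<in> J" and y: "y \<in> J"
    and ub: "\<And>z. z \<in> J \<Longrightarrow> \<bar>f' z\<bar> \<le> K"
  shows "\<bar>f x - f y\<bar> \<le> K * \<bar>x - y\<bar>"
proof -
  have gen: "\<bar>f v - f u\<bar> \<le> K * \<bar>v - u\<bar>" if "u \<in> J" "v \<in> J" "u < v" for u v
  proof -
    obtain z where z: "u < z" "z < v" "f v - f u = (v - u) * f' z"
      using MVT2[OF \<open>u < v\<close>, of f f'] der by blast
    have "z \<in> J" using J that z unfolding is_interval_1 by (meson less_imp_le)
    then have "\<bar>f' z\<bar> \<le> K" by (rule ub)
    then have "\<bar>v - u\<bar> * \<bar>f' z\<bar> \<le> \<bar>v - u\<bar> * K" by (intro mult_left_mono) auto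
    then show ?thesis using z by (simp add: abs_mult mult.commute)
  qed
  show ?thesis
  proof (cases x y rule: linorder_cases)
    case less then show ?thesis using gen[OF x y] by (simp add: abs_minus_commute)
  next
    case equal then show ?thesis by simp
  next
    case greater then show ?thesis using gen[OF y x] by (simp add: abs_minus_commute)
  qed
qed

lemma sub_meas:
  fixes f :: "real \<Rightarrow> real"
  assumes "continuous_on UNIV f" "is_interval J"
  shows "{y \<in> J. \<bar>f y\<bar> < d} \<in> sets lborel"
proof -
  have "{y \<in> J. \<bar>f y\<bar> < d} = J \<inter> {y. \<bar>f y\<bar> < d}" by auto
  moreover have "open {y. \<bar>f y\<bar> < d}"
    by (rule open_Collect_less) (intro continuous_intros assms(1))+
  ultimately show ?thesis using real_interval_borel_measurable[OF assms(2)] by (auto intro: borel_open)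
qed

lemma meas_le1:
  assumes "A \<subseteq> {0..1::real}" "A \<in> sets lborel"
  shows "measure lborel A \<le> 1"
proof -
  have "measure lborel A \<le> measure lborel {0..1::real}"
    by (rule measure_mono_fmeasurable) (use assms in \<open>auto simp: fmeasurable_compact\<close>)
  then show ?thesis by simp
qed

lemma sub_fixed:
  fixes F :: "nat \<Rightarrow> real \<Rightarrow> real"
  assumes der: "\<And>j y. (F j has_real_derivative F (Suc j) y) (at y)"
  shows "is_interval J \<Longrightarrow> J \<subseteq> {0..1} \<Longrightarrow> c > 0 \<Longrightarrow> \<delta> > 0 \<Longrightarrow> (\<forall>y\<in>J. \<bar>F r y\<bar> \<ge> c) \<Longrightarrow>
    measure lborel {y\<in>J. \<bar>F 0 y\<bar> < \<delta>} \<le> 6 ^ r * (\<delta> / c) powr ((1/2) ^ r)"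
proof (induction r arbitrary: J c \<delta>)
  have cont: "continuous_on UNIV (F j)" for j
    using der by (meson DERIV_isCont continuous_at_imp_continuous_on)
  {
    case 0
    show ?case
    proof (cases "\<delta> \<le> c")
      case True
      then have e: "{y\<in>J. \<bar>F 0 y\<bar> < \<delta>} = {}" using 0 by force
      have "0 \<le> (6::real) ^ 0 * (\<delta> / c) powr ((1/2) ^ 0)" by simp
      then show ?thesis by (simp only: e measure_empty)
    next
      case False
      then have "measure lborel {y\<in>J. \<bar>F 0 y\<bar> < \<delta>} \<le> 1"
        using 0 by (intro meas_le1 sub_meas cont) auto
      also have "1 \<le> \<delta> / c" using False 0 by simp
      also have "\<delta> / c = (6::real) ^ 0 * (\<delta> / c) powr ((1/2) ^ 0)" using 0 by simp
      finally show ?thesis .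
    qed
  next
    case (Suc r)
    define t where "t = \<delta> / c"
    have t: "t > 0" using Suc.prems by (simp add: t_def)
    have E_meas: "{y\<in>J. \<bar>F 0 y\<bar> < \<delta>} \<in> sets lborel" using Suc.prems by (intro sub_meas cont) auto
    show ?case
    proof (cases "t \<ge> 1")
      case True
      have "measure lborel {y\<in>J. \<bar>F 0 y\<bar> < \<delta>} \<le> 1"
        using Suc.prems E_meas by (intro meas_le1) auto
      also have "1 \<le> (6::real) ^ Suc r * t powr ((1/2) ^ Suc r)"
      proof -
        have "1 \<le> t powr ((1/2) ^ Suc r)" using True by (intro ge_one_powr_ge_zero) auto
        moreover have "(1::real) \<le> 6 ^ Suc r" by (intro one_le_power) auto
        ultimately show ?thesis by (metis mult_mono' mult_1 zero_le_one)
      qed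
      finally show ?thesis by (simp add: t_def)
    next
      case False
      then have t1: "t < 1" by simp
      define \<beta> where "\<beta> = c * sqrt t"
      have \<beta>: "\<beta> > 0" using Suc.prems t by (simp add: \<beta>_def)
      have db: "\<delta> / \<beta> = sqrt t"
        using Suc.prems t by (simp add: \<beta>_def t_def field_simps)
      have sq: "sqrt t powr ((1/2) ^ r) = t powr ((1/2) ^ Suc r)"
        using t by (simp add: powr_half_sqrt[symmetric] powr_powr less_imp_le)
      have IHb: "measure lborel {y\<in>J'. \<bar>F 0 y\<bar> < \<delta>} \<le> 6 ^ r * t powr ((1/2) ^ Suc r)"
        if "is_interval J'" "J' \<subseteq> J" "\<forall>y\<in>J'. \<bar>F r y\<bar> \<ge> \<beta>" for J'
        using Suc.IH[of J' \<beta> \<delta>] that Suc.prems \<beta> by (simp add: db sq)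
      have tpow: "sqrt t \<le> t powr ((1/2) ^ Suc r)"
      proof -
        have "t powr (1/2) \<le> t powr ((1/2) ^ Suc r)"
          by (rule powr_mono') (use t t1 in \<open>auto intro: power_le_one\<close>)
        then show ?thesis using t by (simp add: powr_half_sqrt less_imp_le)
      qed
      have tp0: "t powr ((1/2) ^ Suc r) \<ge> 0" by simp
      show ?thesis
      proof (cases "\<exists>y0\<in>J. \<bar>F r y0\<bar> < \<beta>")
        case False
        then have "measure lborel {y\<in>J. \<bar>F 0 y\<bar> < \<delta>} \<le> 6 ^ r * t powr ((1/2) ^ Suc r)"
          using Suc.prems by (intro IHb) (auto simp: not_less)
        also have "\<dots> \<le> 6 ^ Suc r * t powr ((1/2) ^ Suc r)"
          using tp0 by (intro mult_right_mono) auto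
        finally show ?thesis by (simp add: t_def)
      next
        case True
        then obtain y0 where y0: "y0 \<in> J" "\<bar>F r y0\<bar> < \<beta>" by blast
        define d where "d = 2 * \<beta> / c"
        have close: "\<bar>y - y0\<bar> \<le> d" if "y \<in> J" "\<bar>F r y\<bar> < \<beta>" for y
        proof -
          have "c * \<bar>y - y0\<bar> \<le> \<bar>F r y - F r y0\<bar>"
            by (rule mvt_lower[OF der Suc.prems(1) that(1) y0(1)]) (use Suc.prems(5) in auto)
          also have "\<dots> < 2 * \<beta>" using that(2) y0(2) by linarith
          finally show ?thesis using Suc.prems(3) by (simp add: d_def field_simps)
        qed
        define J1 where "J1 = J \<inter> {..<y0 - d}"
        define J2 where "J2 = J \<inter> {y0 + d<..}"
        have J12: "is_interval J1" "is_interval J2" "J1 \<subseteq> J" "J2 \<subseteq> J"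
          unfolding J1_def J2_def using Suc.prems(1) by (auto intro!: is_interval_Int simp: is_interval_1)
        have lb1: "\<forall>y\<in>J1. \<bar>F r y\<bar> \<ge> \<beta>" using close unfolding J1_def by force
        have lb2: "\<forall>y\<in>J2. \<bar>F r y\<bar> \<ge> \<beta>" using close unfolding J2_def by force
        have sub: "{y\<in>J. \<bar>F 0 y\<bar> < \<delta>} \<subseteq> ({y\<in>J1. \<bar>F 0 y\<bar> < \<delta>} \<union> {y\<in>J2. \<bar>F 0 y\<bar> < \<delta>}) \<union> {y0 - d .. y0 + d}"
          unfolding J1_def J2_def by auto
        have m1: "{y\<in>J1. \<bar>F 0 y\<bar> < \<delta>} \<in> sets lborel" "{y\<in>J2. \<bar>F 0 y\<bar> < \<delta>} \<in> sets lborel"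
          by (rule sub_meas[OF cont J12(1)], rule sub_meas[OF cont J12(2)])
        have "measure lborel {y\<in>J. \<bar>F 0 y\<bar> < \<delta>}
            \<le> measure lborel (({y\<in>J1. \<bar>F 0 y\<bar> < \<delta>} \<union> {y\<in>J2. \<bar>F 0 y\<bar> < \<delta>}) \<union> {y0 - d .. y0 + d})"
        proof (rule measure_mono_fmeasurable[OF sub E_meas])
          let ?U = "({y\<in>J1. \<bar>F 0 y\<bar> < \<delta>} \<union> {y\<in>J2. \<bar>F 0 y\<bar> < \<delta>}) \<union> {y0 - d .. y0 + d}"
          have Us: "?U \<in> sets lborel" using m1 by auto
          have Ub: "?U \<subseteq> {min 0 (y0 - d) .. max 1 (y0 + d)}"
          proof
            fix x assume "x \<in> ?U"
            then have "x \<in> J \<or> x \<in> {y0 - d .. y0 + d}" using J12 by blast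
            moreover have "x \<in> J \<Longrightarrow> 0 \<le> x \<and> x \<le> 1" using Suc.prems(2) by auto
            ultimately show "x \<in> {min 0 (y0 - d) .. max 1 (y0 + d)}" by auto
          qed
          show "?U \<in> fmeasurable lborel"
            by (rule fmeasurableI2[OF _ Ub Us]) (simp add: fmeasurable_compact)
        qed
        also have "\<dots> \<le> (measure lborel {y\<in>J1. \<bar>F 0 y\<bar> < \<delta>} + measure lborel {y\<in>J2. \<bar>F 0 y\<bar> < \<delta>})
                        + measure lborel {y0 - d .. y0 + d}"
          by (intro order_trans[OF measure_Un_le] add_mono measure_Un_le) (use m1 in auto)
        also have "\<dots> \<le> (6 ^ r * t powr ((1/2) ^ Suc r) + 6 ^ r * t powr ((1/2) ^ Suc r)) + 4 * sqrt t"
        proof (intro add_mono IHb J12 lb1 lb2)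
          have "d \<ge> 0" using \<beta> Suc.prems by (simp add: d_def)
          then show "measure lborel {y0 - d .. y0 + d} \<le> 4 * sqrt t"
            using Suc.prems by (simp add: d_def \<beta>_def)
        qed
        also have "\<dots> \<le> 6 ^ Suc r * t powr ((1/2) ^ Suc r)"
        proof -
          have "(4::real) + 2 * 6 ^ r \<le> 6 ^ Suc r"
            using one_le_power[of "6::real" r] by simp
          then have "(4 + 2 * 6 ^ r) * t powr ((1/2) ^ Suc r) \<le> 6 ^ Suc r * t powr ((1/2) ^ Suc r)"
            using tp0 by (intro mult_right_mono) auto
          then show ?thesis using tpow by (simp add: algebra_simps)
        qed
        finally show ?thesis by (simp add: t_def)
      qed
    qed
  }
qed


lemma piece_cover:
  fixes y :: real and n :: nat
  assumes "n > 0" "y \<in> {0..1}"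
  shows "\<exists>i<n. y \<in> {real i / real n .. (real i + 1) / real n}"
proof (cases "y = 1")
  case True
  then show ?thesis using assms by (intro exI[of _ "n - 1"]) (auto simp: field_simps of_nat_diff)
next
  case False
  then have y1: "y < 1" using assms by auto
  define i where "i = nat \<lfloor>y * n\<rfloor>"
  have fl: "real_of_int \<lfloor>y * n\<rfloor> \<le> y * n" "y * n < real_of_int \<lfloor>y * n\<rfloor> + 1"
    by (rule of_int_floor_le, rule real_of_int_floor_add_one_gt)
  have nn: "\<lfloor>y * n\<rfloor> \<ge> 0" using assms by auto
  then have ri: "real i = real_of_int \<lfloor>y * n\<rfloor>" unfolding i_def by simp
  have "y * n < n" using y1 assms by simp
  then have "real i < n" using ri fl by linarith
  then have "i < n" by simp
  moreover have "real i / n \<le> y" using ri fl assms by (simp add: field_simps)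
  moreover have "y \<le> (real i + 1) / n" using ri fl assms by (simp add: field_simps)
  ultimately show ?thesis by auto
qed

lemma sub_global:
  fixes F :: "nat \<Rightarrow> real \<Rightarrow> real"
  assumes der: "\<And>j y. (F j has_real_derivative F (Suc j) y) (at y)"
    and K: "K > 0" "\<And>r y. r \<le> m \<Longrightarrow> y \<in> {0..1} \<Longrightarrow> \<bar>F (Suc r) y\<bar> \<le> K"
    and nd: "\<And>y. y \<in> {0..1} \<Longrightarrow> \<exists>r\<le>m. \<bar>F r y\<bar> \<ge> c" and c: "c > 0" and \<delta>: "\<delta> > 0"
  shows "measure lborel {y\<in>{0..1}. \<bar>F 0 y\<bar> < \<delta>} \<le> real (nat \<lceil>2 * K / c\<rceil> + 1) * 6 ^ m * (2 * \<delta> / c) powr ((1/2) ^ m)"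
proof -
  define n where "n = nat \<lceil>2 * K / c\<rceil> + 1"
  have n: "n > 0" "real n \<ge> 2 * K / c" unfolding n_def by (auto simp: of_nat_nat) linarith
  define P where "P i = {real i / real n .. (real i + 1) / real n}" for i
  define t where "t = 2 * \<delta> / c"
  have t: "t > 0" using c \<delta> by (simp add: t_def)
  have cont: "continuous_on UNIV (F j)" for j
    using der by (meson DERIV_isCont continuous_at_imp_continuous_on)
  have E_meas: "{y\<in>{0..1}. \<bar>F 0 y\<bar> < \<delta>} \<in> sets lborel" by (rule sub_meas[OF cont]) (simp add: is_interval_cc)
  have rhs0: "0 \<le> real n * 6 ^ m * t powr ((1/2) ^ m)" by simp
  show ?thesis
  proof (cases "t \<ge> 1")
    case True
    have "measure lborel {y\<in>{0..1}. \<bar>F 0 y\<bar> < \<delta>} \<le> 1" by (rule meas_le1[OF _ E_meas]) auto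
    also have "1 \<le> real n * 6 ^ m * t powr ((1/2) ^ m)"
    proof -
      have "1 \<le> t powr ((1/2) ^ m)" using True by (intro ge_one_powr_ge_zero) auto
      moreover have "(1::real) \<le> 6 ^ m" by (intro one_le_power) auto
      moreover have "(1::real) \<le> real n" using n by simp
      ultimately show ?thesis by (metis mult_mono' mult_1 zero_le_one order.trans)
    qed
    finally show ?thesis by (simp add: t_def n_def)
  next
    case False
    then have t1: "t \<le> 1" by simp
    have Psub: "P i \<subseteq> {0..1}" if "i < n" for i
      using that n unfolding P_def by (auto simp: field_simps)
    have Pint: "is_interval (P i)" for i unfolding P_def by (rule is_interval_cc)
    have Pmeas: "{y\<in>P i. \<bar>F 0 y\<bar> < \<delta>} \<in> sets lborel" for i by (rule sub_meas[OF cont Pint])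
    have piece: "measure lborel {y\<in>P i. \<bar>F 0 y\<bar> < \<delta>} \<le> 6 ^ m * t powr ((1/2) ^ m)" if "i < n" for i
    proof -
      define y0 where "y0 = real i / real n"
      have y0: "y0 \<in> P i" "y0 \<in> {0..1}" using Psub[OF that] n unfolding P_def y0_def by (auto simp: field_simps)
      obtain r where r: "r \<le> m" "\<bar>F r y0\<bar> \<ge> c" using nd[OF y0(2)] by blast
      have lb: "\<forall>y\<in>P i. \<bar>F r y\<bar> \<ge> c / 2"
      proof
        fix y assume y: "y \<in> P i"
        have "\<bar>F r y - F r y0\<bar> \<le> K * \<bar>y - y0\<bar>"
          by (rule mvt_upper[OF der Pint y y0(1)]) (use K r Psub[OF that] in auto)
        also have "y0 \<le> y" "y \<le> y0 + 1 / real n" using y unfolding P_def y0_def by (auto simp: add_divide_distrib)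
        then have "\<bar>y - y0\<bar> \<le> 1 / real n" by linarith
        then have "K * \<bar>y - y0\<bar> \<le> K * (1 / real n)" using K by (intro mult_left_mono) auto
        also have "K * (1 / real n) \<le> c / 2" using n c K by (simp add: field_simps)
        finally show "\<bar>F r y\<bar> \<ge> c / 2" using r by linarith
      qed
      have "measure lborel {y\<in>P i. \<bar>F 0 y\<bar> < \<delta>} \<le> 6 ^ r * (\<delta> / (c / 2)) powr ((1/2) ^ r)"
        by (rule sub_fixed[OF der Pint Psub[OF that] _ \<delta> lb]) (use c in simp)
      also have "\<delta> / (c / 2) = t" by (simp add: t_def)
      also have "6 ^ r * t powr ((1/2) ^ r) \<le> 6 ^ m * t powr ((1/2) ^ m)"
      proof (intro mult_mono)
        show "(6::real) ^ r \<le> 6 ^ m" using r by (intro power_increasing) auto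
        show "t powr ((1/2) ^ r) \<le> t powr ((1/2) ^ m)"
          by (rule powr_mono') (use t t1 r in \<open>auto intro: power_decreasing\<close>)
      qed auto
      finally show ?thesis .
    qed
    have cover: "{y\<in>{0..1}. \<bar>F 0 y\<bar> < \<delta>} \<subseteq> (\<Union>i\<in>{..<n}. {y\<in>P i. \<bar>F 0 y\<bar> < \<delta>})"
      using piece_cover[OF n(1)] unfolding P_def by fastforce
    have "measure lborel {y\<in>{0..1}. \<bar>F 0 y\<bar> < \<delta>} \<le> measure lborel (\<Union>i\<in>{..<n}. {y\<in>P i. \<bar>F 0 y\<bar> < \<delta>})"
    proof (rule measure_mono_fmeasurable[OF cover E_meas])
      show "(\<Union>i\<in>{..<n}. {y\<in>P i. \<bar>F 0 y\<bar> < \<delta>}) \<in> fmeasurable lborel"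
        by (rule fmeasurableI2[of "{0..1}"]) (use Psub Pmeas in \<open>auto simp: fmeasurable_compact\<close>)
    qed
    also have "\<dots> \<le> (\<Sum>i\<in>{..<n}. measure lborel {y\<in>P i. \<bar>F 0 y\<bar> < \<delta>})"
      by (rule measure_UNION_le) (use Pmeas in auto)
    also have "\<dots> \<le> (\<Sum>i\<in>{..<n}. 6 ^ m * t powr ((1/2) ^ m))"
      by (rule sum_mono) (use piece in auto)
    also have "\<dots> = real n * 6 ^ m * t powr ((1/2) ^ m)" by simp
    finally show ?thesis by (simp add: t_def n_def)
  qed
qed


context wf begin

definition Bm :: "nat \<Rightarrow> real" where "Bm m = (\<Sum>r\<le>m. Bd r)"

lemma Bm_ge: "r \<le> m \<Longrightarrow> Bd r \<le> Bm m"
  unfolding Bm_def by (rule member_le_sum) (auto intro: less_imp_le[OF Bd_pos])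

lemma Bm_pos: "Bm m > 0"
  using Bm_ge[of 0 m] Bd_pos[of 0] by simp

lemma nondeg_fin:
  assumes H: "cond_H b \<gamma> \<phi>"
  shows "\<exists>m c L. c > 0 \<and> L \<ge> 1 \<and> (\<forall>s t N y. (\<forall>i<N. s i < b) \<and> (\<forall>i<N. t i < b) \<and> s 0 \<noteq> t 0 \<and> N \<ge> L \<and> y \<in> {0..1}
      \<longrightarrow> (\<exists>r\<le>m. \<bar>Gf r s N y - Gf r t N y\<bar> \<ge> c))"
proof -
  obtain m c where c: "c > 0" and mc: "\<And>s t y. (s, t, y) \<in> KK \<Longrightarrow> \<exists>r\<le>m. \<bar>Dl r (s, t, y)\<bar> \<ge> c"
    using nondeg_inf[OF H] by blast
  define B where "B = Bm m / (1 - \<gamma>)"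
  have B: "B > 0" using Bm_pos g1 by (simp add: B_def)
  obtain L0 where L0: "\<gamma> ^ L0 < c / (4 * B)"
    using real_arch_pow_inv[of "c / (4 * B)" \<gamma>] c B g1 by auto
  define L where "L = Suc L0"
  have "\<forall>s t N y. (\<forall>i<N. s i < b) \<and> (\<forall>i<N. t i < b) \<and> s 0 \<noteq> t 0 \<and> N \<ge> L \<and> y \<in> {0..1}
      \<longrightarrow> (\<exists>r\<le>m. \<bar>Gf r s N y - Gf r t N y\<bar> \<ge> c / 2)"
  proof (intro allI impI)
    fix s t N and y :: real assume a: "(\<forall>i<N. s i < b) \<and> (\<forall>i<N. t i < b) \<and> s 0 \<noteq> t 0 \<and> L \<le> N \<and> y \<in> {0..1}"
    define s' where "s' i = (if i < N then s i else 0)" for i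
    define t' where "t' i = (if i < N then t i else 0)" for i
    have N1: "N > 0" using a by (auto simp: L_def)
    have "(s', t', y) \<in> KK" unfolding KK_iff Sigma_b_def s'_def t'_def using a b2 N1 by auto
    then obtain r where r: "r \<le> m" "\<bar>Dl r (s', t', y)\<bar> \<ge> c" using mc by blast
    have e1: "Gf r s N y = Gf r s' N y" "Gf r t N y = Gf r t' N y"
      by (rule Gf_cong, simp add: s'_def, rule Gf_cong, simp add: t'_def)
    have gN: "\<gamma> ^ N \<le> \<gamma> ^ L0" using a g0 g1 by (intro power_decreasing) (auto simp: L_def)
    have tb: "\<bar>Gi r u y - Gf r u N y\<bar> \<le> c / 4" for u
    proof -
      have "\<bar>Gi r u y - Gf r u N y\<bar> \<le> \<gamma> ^ N * Bd r / (1 - \<gamma>)" by (rule tail_bound)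
      also have "\<dots> \<le> \<gamma> ^ L0 * Bm m / (1 - \<gamma>)"
        using gN Bm_ge[OF r(1)] g0 g1 Bd_pos[of r] by (intro divide_right_mono mult_mono) auto
      also have "\<dots> = \<gamma> ^ L0 * B" by (simp add: B_def)
      also have "\<dots> \<le> c / 4" using L0 B by (simp add: field_simps)
      finally show ?thesis .
    qed
    have "c \<le> \<bar>Gi r s' y - Gi r t' y\<bar>" using r(2) by (simp add: Dl_def)
    also have "\<dots> \<le> \<bar>Gf r s' N y - Gf r t' N y\<bar> + \<bar>Gi r s' y - Gf r s' N y\<bar> + \<bar>Gi r t' y - Gf r t' N y\<bar>"
      by linarith
    also have "\<dots> \<le> \<bar>Gf r s N y - Gf r t N y\<bar> + c / 4 + c / 4" using e1 tb[of s'] tb[of t'] by simp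
    finally have "\<bar>Gf r s N y - Gf r t N y\<bar> \<ge> c / 2" by simp
    then show "\<exists>r\<le>m. \<bar>Gf r s N y - Gf r t N y\<bar> \<ge> c / 2" using r(1) by blast
  qed
  then show ?thesis using c by (intro exI[of _ m] exI[of _ "c / 2"] exI[of _ L]) (auto simp: L_def)
qed

lemma sublevel_words:
  assumes H: "cond_H b \<gamma> \<phi>"
  shows "\<exists>L C \<alpha>. L \<ge> 1 \<and> C \<ge> 0 \<and> \<alpha> > 0 \<and> (\<forall>s t N \<delta>. (\<forall>i<N. s i < b) \<and> (\<forall>i<N. t i < b) \<and> s 0 \<noteq> t 0 \<and> N \<ge> L \<and> \<delta> > 0
      \<longrightarrow> measure lborel {y\<in>{0..1}. \<bar>Gf 0 s N y - Gf 0 t N y\<bar> < \<delta>} \<le> C * \<delta> powr \<alpha>)"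
proof -
  obtain m c L where c: "c > 0" "L \<ge> 1" and mc: "\<And>s t N y. (\<forall>i<N. s i < b) \<and> (\<forall>i<N. t i < b) \<and> s 0 \<noteq> t 0 \<and> N \<ge> L \<and> y \<in> {0..1}
      \<Longrightarrow> (\<exists>r\<le>m. \<bar>Gf r s N y - Gf r t N y\<bar> \<ge> c)"
    using nondeg_fin[OF H] by blast
  define K where "K = 2 * Bm (Suc m) / (1 - \<gamma>)"
  have K: "K > 0" using Bm_pos g1 by (simp add: K_def)
  define \<alpha> :: real where "\<alpha> = (1/2) ^ m"
  define C where "C = real (nat \<lceil>2 * K / c\<rceil> + 1) * 6 ^ m * (2 / c) powr \<alpha>"
  have "C \<ge> 0" using c by (simp add: C_def)
  moreover have "\<alpha> > 0" by (simp add: \<alpha>_def)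
  moreover have "\<forall>s t N \<delta>. (\<forall>i<N. s i < b) \<and> (\<forall>i<N. t i < b) \<and> s 0 \<noteq> t 0 \<and> N \<ge> L \<and> \<delta> > 0
      \<longrightarrow> measure lborel {y\<in>{0..1}. \<bar>Gf 0 s N y - Gf 0 t N y\<bar> < \<delta>} \<le> C * \<delta> powr \<alpha>"
  proof (intro allI impI)
    fix s t N and \<delta> :: real
    assume a: "(\<forall>i<N. s i < b) \<and> (\<forall>i<N. t i < b) \<and> s 0 \<noteq> t 0 \<and> N \<ge> L \<and> \<delta> > 0"
    define F where "F r y = Gf r s N y - Gf r t N y" for r y
    have "measure lborel {y\<in>{0..1}. \<bar>F 0 y\<bar> < \<delta>} \<le> real (nat \<lceil>2 * K / c\<rceil> + 1) * 6 ^ m * (2 * \<delta> / c) powr ((1/2) ^ m)"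
    proof (rule sub_global[OF _ K])
      show "(F j has_real_derivative F (Suc j) y) (at y)" for j y
        unfolding F_def[abs_def] by (intro DERIV_diff Gf_deriv)
      show "\<bar>F (Suc r) y\<bar> \<le> K" if "r \<le> m" for r y
      proof -
        have "\<bar>F (Suc r) y\<bar> \<le> \<bar>Gf (Suc r) s N y\<bar> + \<bar>Gf (Suc r) t N y\<bar>" unfolding F_def by simp
        also have "\<dots> \<le> Bd (Suc r) / (1 - \<gamma>) + Bd (Suc r) / (1 - \<gamma>)" by (intro add_mono Gf_bound)
        also have "\<dots> = 2 * Bd (Suc r) / (1 - \<gamma>)" by simp
        also have "\<dots> \<le> K" unfolding K_def using Bm_ge[of "Suc r" "Suc m"] that g1
          by (intro divide_right_mono) auto
        finally show ?thesis .
      qed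
      show "\<exists>r\<le>m. \<bar>F r y\<bar> \<ge> c" if "y \<in> {0..1}" for y
        using mc[where s=s and t=t and N=N and y=y] a that unfolding F_def by blast
    qed (use c a in auto)
    also have "(2 * \<delta> / c) powr ((1/2) ^ m) = (2 / c) powr \<alpha> * \<delta> powr \<alpha>"
      unfolding \<alpha>_def using c a by (simp add: powr_mult[symmetric])
    finally show "measure lborel {y\<in>{0..1}. \<bar>Gf 0 s N y - Gf 0 t N y\<bar> < \<delta>} \<le> C * \<delta> powr \<alpha>"
      unfolding F_def C_def by (simp add: mult.assoc)
  qed
  ultimately show ?thesis using c by blast
qed

end


lemma sum_split_add: "(\<Sum>n<k + (M::nat). f n) = (\<Sum>n<k. f n) + (\<Sum>j<M. f (k + j))"
  by (induction M) (auto simp: add_ac)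

lemma words_alt: "words b m = {xs. set xs \<subseteq> {..<b} \<and> length xs = m}"
  unfolding words_def by auto

lemma words_finite: "finite (words b m)"
  unfolding words_alt by (rule finite_lists_length_eq) simp

lemma words_card: "card (words b m) = b ^ m"
  unfolding words_alt by (subst card_lists_length_eq) simp_all

context wf begin

definition gp :: "nat list \<Rightarrow> real \<Rightarrow> real" where
  "gp p x = (x + (\<Sum>i<length p. real (p ! i) * real b ^ i)) / real b ^ length p"

lemma Gf0: "Gf 0 s N x = (\<Sum>n<N. \<gamma> ^ n * \<phi> (arg s n x))"
  unfolding Gf_def tm_def D0 by simp

lemma digits_le: "(\<And>i. i < k \<Longrightarrow> s i < b) \<Longrightarrow> (\<Sum>i<k. real (s i) * real b ^ i) \<le> real b ^ k - 1"
proof (induction k)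
  case 0 then show ?case by simp
next
  case (Suc k)
  have "s k \<le> b - 1" using Suc.prems[of k] by simp
  then have "real (s k) \<le> real b - 1" using b2 by (simp add: of_nat_diff)
  then have "real (s k) * real b ^ k \<le> (real b - 1) * real b ^ k" by (intro mult_right_mono) auto
  moreover have "(\<Sum>i<k. real (s i) * real b ^ i) \<le> real b ^ k - 1" using Suc by auto
  ultimately show ?case by (simp add: algebra_simps)
qed

lemma gp_01:
  assumes "x \<in> {0..1}" "\<forall>j\<in>set p. j < b"
  shows "gp p x \<in> {0..1}"
proof -
  have "(\<Sum>i<length p. real (p ! i) * real b ^ i) \<le> real b ^ length p - 1"
    by (rule digits_le) (use assms(2) in auto)
  moreover have "(\<Sum>i<length p. real (p ! i) * real b ^ i) \<ge> 0" by (intro sum_nonneg) auto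
  ultimately show ?thesis using assms(1) bpos unfolding gp_def by (auto simp: field_simps)
qed

lemma arg_append:
  assumes "j < length u"
  shows "arg (\<lambda>i. (p @ u) ! i) (length p + j) x = arg (\<lambda>i. u ! i) j (gp p x)"
proof -
  let ?k = "length p"
  have "(\<Sum>i\<le>?k + j. real ((p @ u) ! i) * real b ^ i)
      = (\<Sum>i<?k + Suc j. real ((p @ u) ! i) * real b ^ i)" by (simp add: lessThan_Suc_atMost)
  also have "\<dots> = (\<Sum>i<?k. real ((p @ u) ! i) * real b ^ i) + (\<Sum>i<Suc j. real ((p @ u) ! (?k + i)) * real b ^ (?k + i))"
    by (rule sum_split_add)
  also have "(\<Sum>i<?k. real ((p @ u) ! i) * real b ^ i) = (\<Sum>i<?k. real (p ! i) * real b ^ i)"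
    by (intro sum.cong) (auto simp: nth_append)
  also have "(\<Sum>i<Suc j. real ((p @ u) ! (?k + i)) * real b ^ (?k + i)) = real b ^ ?k * (\<Sum>i\<le>j. real (u ! i) * real b ^ i)"
    by (simp only: nth_append_length_plus) (simp add: sum_distrib_left lessThan_Suc_atMost power_add algebra_simps del: sum.lessThan_Suc)
  finally have e: "(\<Sum>i\<le>?k + j. real ((p @ u) ! i) * real b ^ i) = (\<Sum>i<?k. real (p ! i) * real b ^ i) + real b ^ ?k * (\<Sum>i\<le>j. real (u ! i) * real b ^ i)" .
  show ?thesis unfolding arg_def gp_def e using bpos
    by (simp add: power_add field_simps)
qed

lemma prefix:
  "Gf 0 (\<lambda>i. (p @ u) ! i) (length p + length u) x
    = Gf 0 (\<lambda>i. p ! i) (length p) x + \<gamma> ^ length p * Gf 0 (\<lambda>i. u ! i) (length u) (gp p x)"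
proof -
  have a1: "arg (\<lambda>i. (p @ u) ! i) n x = arg (\<lambda>i. p ! i) n x" if "n < length p" for n
    by (rule arg_cong') (use that in \<open>auto simp: nth_append\<close>)
  show ?thesis unfolding Gf0 sum_split_add
    by (simp add: a1 arg_append power_add sum_distrib_left mult.assoc)
qed

lemma S_fin_append:
  "S_fin b \<gamma> \<phi> x (p @ u) - S_fin b \<gamma> \<phi> x (p @ v) = \<gamma> ^ length p * (S_fin b \<gamma> \<phi> (gp p x) u - S_fin b \<gamma> \<phi> (gp p x) v)"
  if "length u = length v"
  unfolding S_fin_eq using prefix[of p u x] prefix[of p v x] that by (simp add: algebra_simps)

end


lemma affine_meas:
  fixes t c :: real
  assumes c: "c > 0" and B: "B \<in> sets lborel" "B \<subseteq> {0..1}"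
  shows "measure lborel {x\<in>{0..1}. t + c * x \<in> B} \<le> measure lborel B / c"
proof -
  have Bb[measurable]: "B \<in> sets borel" using B by simp
  define Pre where "Pre = {x. t + c * x \<in> B}"
  have Pm: "Pre \<in> sets lborel" unfolding Pre_def by measurable
  have "(\<integral>\<^sup>+x. indicator B x \<partial>lborel) = ennreal \<bar>c\<bar> * (\<integral>\<^sup>+x. indicator B (t + c * x) \<partial>lborel)"
    by (rule nn_integral_real_affine) (use c in auto)
  moreover have "(\<integral>\<^sup>+x. indicator B x \<partial>lborel) = emeasure lborel B"
    using B by (simp add: nn_integral_indicator)
  moreover have "(\<lambda>x. indicator B (t + c * x) :: ennreal) = indicator Pre"
    unfolding Pre_def by (auto simp: indicator_def)
  moreover have "(\<integral>\<^sup>+x. indicator Pre x \<partial>lborel) = emeasure lborel Pre"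
    using Pm by (simp add: nn_integral_indicator)
  ultimately have eq: "emeasure lborel B = ennreal c * emeasure lborel Pre" using c by simp
  have Bf: "B \<in> fmeasurable lborel"
    by (rule fmeasurableI2[of "{0..1}"]) (use B in \<open>auto simp: fmeasurable_compact\<close>)
  have "emeasure lborel B = ennreal (measure lborel B)" by (rule emeasure_eq_measure2[OF Bf])
  then have "ennreal c * emeasure lborel Pre = ennreal (measure lborel B)" using eq by simp
  then have "ennreal (1 / c) * (ennreal c * emeasure lborel Pre) = ennreal (1 / c) * ennreal (measure lborel B)"
    by simp
  then have ePre: "emeasure lborel Pre = ennreal (measure lborel B / c)"
    using c by (simp add: ennreal_mult'[symmetric] mult.assoc[symmetric] divide_ennreal)
  have Pf: "Pre \<in> fmeasurable lborel" using ePre Pm by (auto simp: fmeasurable_def)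
  have "measure lborel {x\<in>{0..1}. t + c * x \<in> B} \<le> measure lborel Pre"
    by (rule measure_mono_fmeasurable[OF _ _ Pf]) (auto simp: Pre_def intro: sets.Int[OF _ Pm])
  also have "measure lborel Pre = measure lborel B / c"
    using ePre c by (simp add: measure_def)
  finally show ?thesis .
qed

context wf begin

lemma hat_ex1: "\<exists>!k::int. \<gamma> powi k \<le> 1 / real b ^ n \<and> 1 / real b ^ n < \<gamma> powi (k - 1)"
proof
  define t where "t = 1 / real b ^ n"
  have t: "t > 0" "t \<le> 1" using b2 by (auto simp: t_def)
  have ex: "\<exists>j. \<gamma> ^ j \<le> t" using real_arch_pow_inv[OF t(1) g1] by (auto intro: less_imp_le)
  define j where "j = (LEAST j. \<gamma> ^ j \<le> t)"
  have j: "\<gamma> ^ j \<le> t" unfolding j_def by (rule LeastI_ex[OF ex])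
  have j2: "t < \<gamma> powi (int j - 1)"
  proof (cases j)
    case 0
    then have "\<gamma> powi (int j - 1) = 1 / \<gamma>" by (simp add: power_int_minus inverse_eq_divide)
    moreover have "1 < 1 / \<gamma>" using g0 g1 by simp
    ultimately show ?thesis using t by simp
  next
    case (Suc i)
    have "i < (LEAST j. \<gamma> ^ j \<le> t)" using Suc by (simp add: j_def[symmetric])
    then have "\<not> \<gamma> ^ i \<le> t" by (rule not_less_Least)
    moreover have "int j - 1 = int i" using Suc by simp
    then have "\<gamma> powi (int j - 1) = \<gamma> ^ i" by simp
    ultimately show ?thesis by simp
  qed
  show "\<gamma> powi int j \<le> 1 / real b ^ n \<and> 1 / real b ^ n < \<gamma> powi (int j - 1)"
    using j j2 by (simp add: t_def)
  fix k :: int assume k: "\<gamma> powi k \<le> 1 / real b ^ n \<and> 1 / real b ^ n < \<gamma> powi (k - 1)"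
  have uniq: "k1 = k2" if "\<gamma> powi k1 \<le> t \<and> t < \<gamma> powi (k1 - 1)" "\<gamma> powi k2 \<le> t \<and> t < \<gamma> powi (k2 - 1)" for k1 k2
  proof (rule ccontr)
    have dec: "\<gamma> powi B' \<le> \<gamma> powi A'" if "A' \<le> B'" for A' B'
      using power_int_decreasing[OF that, of \<gamma>] g0 g1 by auto
    assume "k1 \<noteq> k2"
    then consider "k1 < k2" | "k2 < k1" by linarith
    then show False
    proof cases
      case 1
      then have "\<gamma> powi (k2 - 1) \<le> \<gamma> powi k1" by (intro dec) auto
      then show False using that by linarith
    next
      case 2
      then have "\<gamma> powi (k1 - 1) \<le> \<gamma> powi k2" by (intro dec) auto
      then show False using that by linarith
    qed
  qed
  show "k = int j" by (rule uniq) (use k j j2 in \<open>auto simp: t_def\<close>)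
qed

lemma hat_spec: "\<gamma> powi hat b \<gamma> n \<le> 1 / real b ^ n \<and> 1 / real b ^ n < \<gamma> powi (hat b \<gamma> n - 1)"
  unfolding hat_def by (rule theI'[OF hat_ex1])

lemma hat_large: "\<exists>n1. \<forall>n\<ge>n1. hat b \<gamma> n \<ge> N1"
proof -
  have p: "\<gamma> powi (N1 - 1) > 0" using g0 by simp
  have bi: "1 / real b < 1" using b2 by simp
  obtain n1 where n1: "(1 / real b) ^ n1 < \<gamma> powi (N1 - 1)" using real_arch_pow_inv[OF p bi] by blast
  have "hat b \<gamma> n \<ge> N1" if "n \<ge> n1" for n
  proof (rule ccontr)
    assume "\<not> hat b \<gamma> n \<ge> N1"
    then have "hat b \<gamma> n \<le> N1 - 1" by simp
    then have "\<gamma> powi (N1 - 1) \<le> \<gamma> powi hat b \<gamma> n"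
      using power_int_decreasing[of "hat b \<gamma> n" "N1 - 1" \<gamma>] g0 g1 by auto
    also have "\<dots> \<le> 1 / real b ^ n" using hat_spec by blast
    also have "\<dots> = (1 / real b) ^ n" by (simp add: power_one_over)
    also have "\<dots> \<le> (1 / real b) ^ n1" using that b2 by (intro power_decreasing) auto
    finally show False using n1 by simp
  qed
  then show ?thesis by blast
qed

end

context wf begin

lemma S_cont: "continuous_on UNIV (\<lambda>x. S_fin b \<gamma> \<phi> (gp p x) u - S_fin b \<gamma> \<phi> (gp p x) v)"
proof -
  have g: "isCont (gp p) x" for x unfolding gp_def[abs_def] by (intro continuous_intros) (use bpos in auto)
  have "isCont (\<lambda>x. Gf 0 s M (gp p x)) x" for s M x
    by (rule isCont_o2[OF g DERIV_isCont[OF Gf_deriv]])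
  then show ?thesis unfolding S_fin_eq
    by (intro continuous_at_imp_continuous_on ballI continuous_intros) auto
qed

lemma gp_affine: "gp p x = (\<Sum>i<length p. real (p ! i) * real b ^ i) / real b ^ length p + (1 / real b ^ length p) * x"
  unfolding gp_def by (simp add: add_divide_distrib)

lemma covering:
  fixes x \<epsilon> \<rho> :: real
  assumes x: "x \<in> {0..1}" and lN: "l < N" and w: "w \<in> words b l"
    and js: "js \<in> words b (N - l)" "js' \<in> words b (N - l)"
    and ne: "S_fin b \<gamma> \<phi> x (js @ w) \<noteq> S_fin b \<gamma> \<phi> x (js' @ w)"
    and le: "\<bar>S_fin b \<gamma> \<phi> x (js @ w) - S_fin b \<gamma> \<phi> x (js' @ w)\<bar> \<le> \<epsilon> ^ N"
    and \<rho>: "\<epsilon> = \<gamma> * \<rho>" "\<rho> > 0"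
  shows "\<exists>k<N. \<exists>p\<in>words b k. \<exists>u\<in>words b (N - k). \<exists>v\<in>words b (N - k).
           u ! 0 \<noteq> v ! 0 \<and> l < N - k \<and>
           \<bar>S_fin b \<gamma> \<phi> (gp p x) u - S_fin b \<gamma> \<phi> (gp p x) v\<bar> < 2 * \<rho> ^ N"
proof -
  define U where "U = js @ w"
  define V where "V = js' @ w"
  have lens: "length U = N" "length V = N" "length js = N - l" "length js' = N - l" "length w = l"
    using js w lN unfolding U_def V_def words_def by auto
  have UV: "U \<noteq> V" using ne unfolding U_def V_def by auto
  then have "\<exists>i<N. U ! i \<noteq> V ! i" using lens by (metis nth_equalityI)
  define k where "k = (LEAST i. U ! i \<noteq> V ! i)"
  have k1: "U ! k \<noteq> V ! k" unfolding k_def by (rule LeastI_ex) (use \<open>\<exists>i<N. U ! i \<noteq> V ! i\<close> in blast)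
  have k2: "U ! i = V ! i" if "i < k" for i using not_less_Least[of i "\<lambda>i. U ! i \<noteq> V ! i"] that unfolding k_def by blast
  have k3: "k < N - l"
  proof (rule ccontr)
    assume "\<not> k < N - l"
    then have "k \<ge> N - l" by simp
    moreover have "k < N"
    proof (rule ccontr)
      assume "\<not> k < N"
      then have "U ! i = V ! i" if "i < N" for i using k2 that by simp
      then show False using UV lens by (metis nth_equalityI)
    qed
    ultimately have "U ! k = w ! (k - (N - l))" "V ! k = w ! (k - (N - l))"
      unfolding U_def V_def using lens by (auto simp: nth_append)
    then show False using k1 by simp
  qed
  define p where "p = take k U"
  define u where "u = drop k U"
  define v where "v = drop k V"
  have pV: "p = take k V" unfolding p_def using k2 k3 lens by (intro nth_take_lemma) auto
  have Ud: "U = p @ u" "V = p @ v"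
    by (simp add: p_def u_def) (simp only: pV v_def append_take_drop_id)
  have lp: "length p = k" unfolding p_def using k3 lens by simp
  have lu: "length u = N - k" "length v = N - k" unfolding u_def v_def using lens by auto
  have letters: "\<forall>j\<in>set U. j < b" "\<forall>j\<in>set V. j < b" using js w unfolding U_def V_def words_def by auto
  have pw: "p \<in> words b k" unfolding words_def using lp letters(1) set_take_subset[of k U] unfolding p_def by auto
  have uw: "u \<in> words b (N - k)" unfolding words_def using lu letters(1) set_drop_subset[of k U] unfolding u_def by auto
  have vw: "v \<in> words b (N - k)" unfolding words_def using lu letters(2) set_drop_subset[of k V] unfolding v_def by auto
  have u0: "u ! 0 \<noteq> v ! 0" unfolding u_def v_def using k1 k3 lens by simp
  have diff: "S_fin b \<gamma> \<phi> x U - S_fin b \<gamma> \<phi> x V = \<gamma> ^ k * (S_fin b \<gamma> \<phi> (gp p x) u - S_fin b \<gamma> \<phi> (gp p x) v)"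
    unfolding Ud using S_fin_append[where u=u and v=v and p=p and x=x] lu lp by simp
  have gk: "\<gamma> ^ N \<le> \<gamma> ^ k" using k3 g0 g1 by (intro power_decreasing) auto
  have gkp: "\<gamma> ^ k > 0" using g0 by simp
  have "\<gamma> ^ k * \<bar>S_fin b \<gamma> \<phi> (gp p x) u - S_fin b \<gamma> \<phi> (gp p x) v\<bar> \<le> \<epsilon> ^ N"
    using le diff g0 unfolding U_def V_def by (simp add: abs_mult)
  also have "\<epsilon> ^ N = \<gamma> ^ N * \<rho> ^ N" using \<rho> by (simp add: power_mult_distrib)
  also have "\<dots> \<le> \<gamma> ^ k * \<rho> ^ N" using gk \<rho> by (intro mult_right_mono) auto
  finally have "\<bar>S_fin b \<gamma> \<phi> (gp p x) u - S_fin b \<gamma> \<phi> (gp p x) v\<bar> \<le> \<rho> ^ N"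
    using gkp by (simp add: mult_le_cancel_left_pos)
  also have "\<dots> < 2 * \<rho> ^ N" using \<rho> by simp
  finally have fin: "\<bar>S_fin b \<gamma> \<phi> (gp p x) u - S_fin b \<gamma> \<phi> (gp p x) v\<bar> < 2 * \<rho> ^ N" .
  have "k < N" "l < N - k" using k3 by auto
  then show ?thesis using pw uw vw u0 fin by blast
qed

end

context wf begin

lemma power_powr: "(x::real) > 0 \<Longrightarrow> (x ^ N) powr a = (x powr a) ^ N"
proof -
  assume x: "x > 0"
  have "(x ^ N) powr a = (x powr real N) powr a" using x by (simp add: powr_realpow)
  also have "\<dots> = (x powr a) powr real N" by (simp add: powr_powr mult.commute)
  also have "\<dots> = (x powr a) ^ N" using x by (simp add: powr_realpow)
  finally show ?thesis .
qed

lemma main: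
  assumes H: "cond_H b \<gamma> \<phi>"
  shows "\<exists>l0::nat. \<exists>eps0::real. eps0 > 0 \<and>
    (AE x in lborel. x \<in> {0..1} \<longrightarrow>
      (\<forall>l\<ge>l0. \<exists>Q::nat set. Q \<subseteq> {1..} \<and> infinite Q \<and>
         (\<forall>w\<in>words b l. \<forall>n\<in>Q. \<forall>p\<in>Xset b \<gamma> \<phi> w x (hat b \<gamma> n).
            \<forall>q\<in>Xset b \<gamma> \<phi> w x (hat b \<gamma> n). p \<noteq> q \<longrightarrow>
              \<bar>p - q\<bar> > eps0 powi (hat b \<gamma> n))))"
proof -
  obtain L C \<alpha> where L: "L \<ge> 1" "C \<ge> 0" "\<alpha> > 0" and SW: "\<And>s t N \<delta>. (\<forall>i<N. s i < b) \<and> (\<forall>i<N. t i < b) \<and> s 0 \<noteq> t 0 \<and> N \<ge> L \<and> \<delta> > 0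
      \<Longrightarrow> measure lborel {y\<in>{0..1}. \<bar>Gf 0 s N y - Gf 0 t N y\<bar> < \<delta>} \<le> C * \<delta> powr \<alpha>"
    using sublevel_words[OF H] by blast
  define q where "q = 1 / (4 * real b ^ 2)"
  have q: "q > 0" using bpos by (simp add: q_def)
  define \<rho> where "\<rho> = q powr (1 / \<alpha>)"
  have \<rho>: "\<rho> > 0" "\<rho> powr \<alpha> = q" using q L by (auto simp: \<rho>_def powr_powr)
  define \<epsilon> where "\<epsilon> = \<gamma> * \<rho>"
  have \<epsilon>: "\<epsilon> > 0" using g0 \<rho> by (simp add: \<epsilon>_def)
  define Bad where "Bad N k p u v = {x\<in>{0..1}. \<bar>S_fin b \<gamma> \<phi> (gp p x) u - S_fin b \<gamma> \<phi> (gp p x) v\<bar>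
      < (if u ! 0 \<noteq> v ! 0 \<and> L < N - k then 2 * \<rho> ^ N else 0)}" for N k p u v
  define A where "A N = (\<Union>k\<in>{..<N}. \<Union>p\<in>words b k. \<Union>u\<in>words b (N - k). \<Union>v\<in>words b (N - k). Bad N k p u v)" for N
  have Bad_meas: "Bad N k p u v \<in> sets lborel" for N k p u v
    unfolding Bad_def by (rule sub_meas[OF S_cont]) (simp add: is_interval_cc)
  have Bad_meas': "Bad N k p u v \<in> sets borel" for N k p u v using Bad_meas[of N k p u v] by simp
  have A_meas: "A N \<in> sets lborel" for N
    unfolding A_def by (intro sets.finite_UN words_finite finite_lessThan ballI Bad_meas)
  have A_sub: "A N \<subseteq> {0..1}" for N unfolding A_def Bad_def by auto
  define X where "X N = C * (2 * \<rho> ^ N) powr \<alpha>" for N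
  have X0: "X N \<ge> 0" for N using L by (simp add: X_def)
  have Bad_bound: "measure lborel (Bad N k p u v) \<le> real b ^ k * X N"
    if pw: "p \<in> words b k" and uw: "u \<in> words b (N - k)" and vw: "v \<in> words b (N - k)" for N k p u v
  proof (cases "u ! 0 \<noteq> v ! 0 \<and> L < N - k")
    case False
    then have "Bad N k p u v = {}" unfolding Bad_def by auto
    then show ?thesis using X0[of N] by simp
  next
    case True
    define \<delta> where "\<delta> = 2 * \<rho> ^ N"
    have \<delta>: "\<delta> > 0" using \<rho> by (simp add: \<delta>_def)
    define B where "B = {y\<in>{0..1}. \<bar>S_fin b \<gamma> \<phi> y u - S_fin b \<gamma> \<phi> y v\<bar> < \<delta>}"
    have gp0: "gp [] y = y" for y by (simp add: gp_def)
    have Bm: "B \<in> sets lborel" unfolding B_def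
      using sub_meas[OF S_cont[of "[]" u v], of "{0..1}" \<delta>] by (simp add: gp0 is_interval_cc)
    have Bs: "B \<subseteq> {0..1}" unfolding B_def by auto
    have lp: "length p = k" "\<forall>j\<in>set p. j < b" using pw unfolding words_def by auto
    have eqB: "Bad N k p u v = {x\<in>{0..1}. gp p x \<in> B}"
      unfolding Bad_def B_def \<delta>_def using True gp_01[OF _ lp(2)] by auto
    also have "\<dots> = {x\<in>{0..1}. (\<Sum>i<length p. real (p ! i) * real b ^ i) / real b ^ length p + (1 / real b ^ length p) * x \<in> B}"
      by (simp add: gp_affine)
    finally have "measure lborel (Bad N k p u v) \<le> measure lborel B / (1 / real b ^ length p)"
      using affine_meas[OF _ Bm Bs, of "1 / real b ^ length p"] bpos by simp
    also have "\<dots> = real b ^ k * measure lborel B" using lp by simp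
    also have "measure lborel B \<le> C * \<delta> powr \<alpha>"
    proof -
      have lu: "length u = N - k" "length v = N - k" "\<forall>j\<in>set u. j < b" "\<forall>j\<in>set v. j < b"
        using uw vw unfolding words_def by auto
      have "B = {y\<in>{0..1}. \<bar>Gf 0 (\<lambda>i. u ! i) (N - k) y - Gf 0 (\<lambda>i. v ! i) (N - k) y\<bar> < \<delta>}"
        unfolding B_def S_fin_eq lu by simp
      also have "measure lborel \<dots> \<le> C * \<delta> powr \<alpha>"
        by (rule SW) (use lu True \<delta> in \<open>auto simp: nth_mem\<close>)
      finally show ?thesis .
    qed
    finally show ?thesis unfolding X_def \<delta>_def using bpos by (simp add: mult_left_mono)
  qed
  have inner: "measure lborel (\<Union>p\<in>words b k. \<Union>u\<in>words b (N - k). \<Union>v\<in>words b (N - k). Bad N k p u v)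
      \<le> real b ^ (2 * N) * X N" if "k < N" for N k
  proof -
    have "measure lborel (\<Union>p\<in>words b k. \<Union>u\<in>words b (N - k). \<Union>v\<in>words b (N - k). Bad N k p u v)
      \<le> (\<Sum>p\<in>words b k. measure lborel (\<Union>u\<in>words b (N - k). \<Union>v\<in>words b (N - k). Bad N k p u v))"
      by (rule measure_UNION_le) (auto intro!: sets.finite_UN words_finite Bad_meas Bad_meas')
    also have "\<dots> \<le> (\<Sum>p\<in>words b k. \<Sum>u\<in>words b (N - k). measure lborel (\<Union>v\<in>words b (N - k). Bad N k p u v))"
      by (intro sum_mono measure_UNION_le) (auto intro!: sets.finite_UN words_finite Bad_meas Bad_meas')
    also have "\<dots> \<le> (\<Sum>p\<in>words b k. \<Sum>u\<in>words b (N - k). \<Sum>v\<in>words b (N - k). measure lborel (Bad N k p u v))"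
      by (intro sum_mono measure_UNION_le) (auto intro!: words_finite Bad_meas Bad_meas')
    also have "\<dots> \<le> (\<Sum>p\<in>words b k. \<Sum>u\<in>words b (N - k). \<Sum>v\<in>words b (N - k). real b ^ k * X N)"
      by (intro sum_mono Bad_bound)
    also have "\<dots> = real b ^ k * real b ^ (N - k) * real b ^ (N - k) * (real b ^ k * X N)"
      by (simp add: words_card)
    also have "\<dots> = real b ^ (2 * N) * X N"
    proof -
      have "real b ^ k * real b ^ (N - k) = real b ^ N" using that by (simp add: power_add[symmetric])
      then show ?thesis by (simp add: power_mult power2_eq_square algebra_simps)
    qed
    finally show ?thesis .
  qed
  have A_bound: "measure lborel (A N) \<le> C * 2 powr \<alpha> * (1/2) ^ N" for N
  proof -
    have "measure lborel (A N) \<le> (\<Sum>k<N. measure lborel (\<Union>p\<in>words b k. \<Union>u\<in>words b (N - k). \<Union>v\<in>words b (N - k). Bad N k p u v))"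
      unfolding A_def by (rule measure_UNION_le) (auto intro!: sets.finite_UN words_finite Bad_meas Bad_meas')
    also have "\<dots> \<le> (\<Sum>k<N. real b ^ (2 * N) * X N)" by (intro sum_mono inner) auto
    also have "\<dots> = real N * real b ^ (2 * N) * X N" by simp
    also have "X N = C * 2 powr \<alpha> * q ^ N"
      unfolding X_def using \<rho> by (simp add: powr_mult power_powr)
    also have "real N * real b ^ (2 * N) * (C * 2 powr \<alpha> * q ^ N) = C * 2 powr \<alpha> * (real N * (1/4) ^ N)"
    proof -
      have "real b ^ (2 * N) * q ^ N = (1/4) ^ N"
        unfolding q_def using bpos by (simp add: power_mult power_divide power_mult_distrib field_simps)
          (simp add: power_mult[symmetric] mult.commute)
      then show ?thesis by (simp add: algebra_simps)
    qed
    also have "\<dots> \<le> C * 2 powr \<alpha> * (1/2) ^ N"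
    proof (rule mult_left_mono)
      have "real N \<le> 2 ^ N" using less_exp[of N] by (metis less_imp_le of_nat_le_iff of_nat_numeral of_nat_power)
      then have "real N * (1/4) ^ N \<le> 2 ^ N * (1/4) ^ N" by (intro mult_right_mono) auto
      also have "(2::real) ^ N * (1/4) ^ N = (1/2) ^ N" by (simp add: power_mult_distrib[symmetric])
      finally show "real N * (1/4) ^ N \<le> (1/2) ^ N" .
    qed (use L in simp)
    finally show ?thesis .
  qed
  have A_fin: "emeasure lborel (A N) < \<infinity>" for N
  proof -
    have "emeasure lborel (A N) \<le> emeasure lborel {0..1::real}" by (rule emeasure_mono[OF A_sub]) simp
    then have "emeasure lborel (A N) \<le> 1" by simp
    also have "(1::ennreal) < \<infinity>" by simp
    finally show ?thesis .
  qed
  have A_sum: "summable (\<lambda>N. measure lborel (A N))"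
    by (rule summable_comparison_test[of _ "\<lambda>N. C * 2 powr \<alpha> * (1/2) ^ N"])
       (use A_bound in \<open>auto intro: summable_mult summable_geometric\<close>)
  have AE: "AE x in lborel. eventually (\<lambda>N. x \<in> space lborel - A N) sequentially"
    by (rule borel_cantelli_AE1[OF A_meas A_fin A_sum])
  show ?thesis
  proof (intro exI[of _ L] exI[of _ \<epsilon>] conjI \<epsilon>)
    show "AE x in lborel. x \<in> {0..1} \<longrightarrow>
      (\<forall>l\<ge>L. \<exists>Q::nat set. Q \<subseteq> {1..} \<and> infinite Q \<and>
         (\<forall>w\<in>words b l. \<forall>n\<in>Q. \<forall>p\<in>Xset b \<gamma> \<phi> w x (hat b \<gamma> n).
            \<forall>q\<in>Xset b \<gamma> \<phi> w x (hat b \<gamma> n). p \<noteq> q \<longrightarrow>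
              \<bar>p - q\<bar> > \<epsilon> powi (hat b \<gamma> n)))"
      using AE
    proof (rule AE_mp, intro AE_I2 impI allI)
      fix x :: real and l :: nat
      assume ev: "eventually (\<lambda>N. x \<in> space lborel - A N) sequentially" and x: "x \<in> {0..1}" and lL: "L \<le> l"
      obtain N0 where N0: "\<And>N. N \<ge> N0 \<Longrightarrow> x \<notin> A N" using ev unfolding eventually_sequentially by auto
      obtain n1 where n1: "\<And>n. n \<ge> n1 \<Longrightarrow> hat b \<gamma> n \<ge> int N0 + 1" using hat_large[of "int N0 + 1"] by blast
      define Q where "Q = {max 1 n1..}"
      show "\<exists>Q::nat set. Q \<subseteq> {1..} \<and> infinite Q \<and>
         (\<forall>w\<in>words b l. \<forall>n\<in>Q. \<forall>p\<in>Xset b \<gamma> \<phi> w x (hat b \<gamma> n).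
            \<forall>q\<in>Xset b \<gamma> \<phi> w x (hat b \<gamma> n). p \<noteq> q \<longrightarrow>
              \<bar>p - q\<bar> > \<epsilon> powi (hat b \<gamma> n))"
      proof (intro exI[of _ Q] conjI ballI impI)
        show "Q \<subseteq> {1..}" unfolding Q_def by auto
        show "infinite Q" unfolding Q_def by (rule infinite_Ici)
        fix w n pp qq assume w: "w \<in> words b l" and n: "n \<in> Q"
          and pp: "pp \<in> Xset b \<gamma> \<phi> w x (hat b \<gamma> n)" and qq: "qq \<in> Xset b \<gamma> \<phi> w x (hat b \<gamma> n)"
          and ne: "pp \<noteq> qq"
        define Nh where "Nh = hat b \<gamma> n"
        have Nh: "Nh \<ge> int N0 + 1" using n1[of n] n unfolding Q_def Nh_def by auto
        have lw: "length w = l" using w unfolding words_def by auto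
        show "\<bar>pp - qq\<bar> > \<epsilon> powi (hat b \<gamma> n)"
        proof (cases "Nh > int l")
          case False
          then have "Xset b \<gamma> \<phi> w x (hat b \<gamma> n) = {0}" unfolding Xset_def Nh_def lw by auto
          then show ?thesis using pp qq ne by auto
        next
          case True
          define N where "N = nat Nh"
          have NN: "Nh = int N" "l < N" "N \<ge> N0" using True Nh unfolding N_def by auto
          have nat_eq: "nat (Nh - int l) = N - l" using NN by auto
          have "Xset b \<gamma> \<phi> w x (hat b \<gamma> n) = {S_fin b \<gamma> \<phi> x (js @ w) | js. js \<in> words b (N - l)}"
            unfolding Xset_def Nh_def[symmetric] lw using True nat_eq by simp
          then obtain js js' where js: "js \<in> words b (N - l)" "js' \<in> words b (N - l)"
            and ppe: "pp = S_fin b \<gamma> \<phi> x (js @ w)" and qqe: "qq = S_fin b \<gamma> \<phi> x (js' @ w)"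
            using pp qq by auto
          have pw: "\<epsilon> powi (hat b \<gamma> n) = \<epsilon> ^ N" using NN unfolding Nh_def by simp
          show ?thesis
          proof (rule ccontr)
            assume "\<not> \<bar>pp - qq\<bar> > \<epsilon> powi (hat b \<gamma> n)"
            then have le: "\<bar>pp - qq\<bar> \<le> \<epsilon> ^ N" using pw by simp
            obtain k p u v where k: "k < N" "p \<in> words b k" "u \<in> words b (N - k)" "v \<in> words b (N - k)"
              "u ! 0 \<noteq> v ! 0" "l < N - k"
              "\<bar>S_fin b \<gamma> \<phi> (gp p x) u - S_fin b \<gamma> \<phi> (gp p x) v\<bar> < 2 * \<rho> ^ N"
              using covering[OF x NN(2) w js ne[unfolded ppe qqe] le[unfolded ppe qqe] \<epsilon>_def \<rho>(1)] by blast
            have "x \<in> Bad N k p u v" unfolding Bad_def using k x lL by auto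
            then have "x \<in> A N" unfolding A_def using k by blast
            then show False using N0[OF NN(3)] by simp
          qed
        qed
      qed
    qed
  qed
qed

end

theorem theorem4p2:
  fixes b :: nat and \<gamma> :: real and \<phi> :: "real \<Rightarrow> real"
  assumes "b \<ge> 2" and "0 < \<gamma>" and "\<gamma> < 1"
    and "real_analytic \<phi>"
    and "\<forall>x. \<phi> (x + 1) = \<phi> x"
    and "cond_H b \<gamma> \<phi>"
  shows "\<exists>l0::nat. \<exists>eps0::real. eps0 > 0 \<and>
    (AE x in lborel. x \<in> {0..1} \<longrightarrow>
      (\<forall>l\<ge>l0. \<exists>Q::nat set. Q \<subseteq> {1..} \<and> infinite Q \<and>
         (\<forall>w\<in>words b l. \<forall>n\<in>Q. \<forall>p\<in>Xset b \<gamma> \<phi> w x (hat b \<gamma> n).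
            \<forall>q\<in>Xset b \<gamma> \<phi> w x (hat b \<gamma> n). p \<noteq> q \<longrightarrow>
              \<bar>p - q\<bar> > eps0 powi (hat b \<gamma> n))))"
proof -
  interpret wf b \<gamma> \<phi>
    by unfold_locales (use assms in auto)
  show ?thesis by (rule main[OF assms(6)])
qed

end
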